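(* Let $n\ge m$, $\nu=w\mu$ with $w$ a probability density w.r.t. $\mu$ satisfying $w\ge\alpha w_m$ for some $\alpha\in(0,1]$, and $\mathbf x\sim\gamma_n^\nu$. For a function $f\in L^2_\mu$ let $f^w=fw^{-1/2}$ and $f^w(\mathbf x)=(f^w(x_1),\dots,f^w(x_n))^T$. Then, with $\beta=1+(\alpha^{-1}-1)\frac mn$ and $\xi=0$ if $\nu=\nu_m$, $\xi=1$ if $\nu\ne\nu_m$, $$\mathbb E\Big(\Big\|\frac1n\Phi^w(\mathbf x)^Tf^w(\mathbf x)\Big\|_2^2\Big)\le\frac mn\alpha^{-1}(\beta+\xi m\alpha^{-1})\|f\|^2+\|P_{V_m}f\|^2.$$ If moreover $\boldsymbol\varphi(x)f(x)\ge0$ (componentwise) for $\mu$-a.e. $x$, then $$\mathbb E\Big(\Big\|\frac1n\Phi^w(\mathbf x)^Tf^w(\mathbf x)\Big\|_2^2\Big)\le\frac mn\alpha^{-1}\beta\|f\|^2+\Big(1+2\alpha^{-2}\frac mn\Big)\|P_{V_m}f\|^2.$$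
   Context: $\mathcal X$ is a Polish space with Borel probability measure $\mu$; $\|\cdot\|$ is the $L^2_\mu$ norm. $V_m\subset L^2_\mu$ has $L^2_\mu$-orthonormal basis $\varphi_1,\dots,\varphi_m$, $\boldsymbol\varphi=(\varphi_1,\dots,\varphi_m)^T$, $P_{V_m}$ the orthogonal projection onto $V_m$, $w_m(x)=\frac1m\|\boldsymbol\varphi(x)\|_2^2$, $\nu_m=w_m\mu$. For $\mathbf x=(x_1,\dots,x_n)$, $\Phi^w(\mathbf x)\in\mathbb R^{n\times m}$ has rows $w(x_i)^{-1/2}\boldsymbol\varphi(x_i)^T$. $\gamma_n^\nu$ is the probability measure on $\mathcal X^n$ with $d\gamma_n^\nu(\mathbf x)=\frac{(n-m)!}{n!}\det(\Phi^w(\mathbf x)^T\Phi^w(\mathbf x))\,d\nu^{\otimes n}(\mathbf x)$. *)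

theory Defs
  imports "HOL-Probability.Probability" "Jordan_Normal_Form.Determinant"
begin

text \<open>Basis functions phi 0, ..., phi (m-1) (0-based indexing of phi_1..phi_m);
  samples x = (x 0, ..., x (n-1)).\<close>

definition wm :: "nat \<Rightarrow> (nat \<Rightarrow> 'a \<Rightarrow> real) \<Rightarrow> 'a \<Rightarrow> real" where
  "wm m phi x = (\<Sum>k<m. (phi k x)^2) / real m"

definition Phi_w :: "nat \<Rightarrow> nat \<Rightarrow> (nat \<Rightarrow> 'a \<Rightarrow> real) \<Rightarrow> ('a \<Rightarrow> real) \<Rightarrow> (nat \<Rightarrow> 'a) \<Rightarrow> real mat" where
  "Phi_w n m phi w xs = mat n m (\<lambda>(i,k). phi k (xs i) / sqrt (w (xs i)))"

definition fw_vec :: "nat \<Rightarrow> ('a \<Rightarrow> real) \<Rightarrow> ('a \<Rightarrow> real) \<Rightarrow> (nat \<Rightarrow> 'a) \<Rightarrow> real vec" where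
  "fw_vec n f w xs = vec n (\<lambda>i. f (xs i) / sqrt (w (xs i)))"

definition gamma_n :: "'a measure \<Rightarrow> nat \<Rightarrow> nat \<Rightarrow> (nat \<Rightarrow> 'a \<Rightarrow> real) \<Rightarrow> ('a \<Rightarrow> real) \<Rightarrow> (nat \<Rightarrow> 'a) measure" where
  "gamma_n M n m phi w =
     density (PiM {..<n} (\<lambda>_. density M (\<lambda>x. ennreal (w x))))
       (\<lambda>xs. ennreal (fact (n - m) / fact n *
          Determinant.det (transpose_mat (Phi_w n m phi w xs) * Phi_w n m phi w xs)))"

definition sqnorm2 :: "real vec \<Rightarrow> real" where
  "sqnorm2 v = (\<Sum>k<dim_vec v. (v $ k)^2)"

definition L2sq :: "'a measure \<Rightarrow> ('a \<Rightarrow> real) \<Rightarrow> real" where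
  "L2sq M f = (\<integral>x. (f x)^2 \<partial>M)"

definition proj_V :: "'a measure \<Rightarrow> nat \<Rightarrow> (nat \<Rightarrow> 'a \<Rightarrow> real) \<Rightarrow> ('a \<Rightarrow> real) \<Rightarrow> 'a \<Rightarrow> real" where
  "proj_V M m phi f x = (\<Sum>k<m. (\<integral>y. f y * phi k y \<partial>M) * phi k x)"

end

theory Submission
  imports Defs
begin


lemma perm_fix_two:
  fixes m i j :: nat and \<sigma> :: "nat \<Rightarrow> nat"
  assumes p: "\<sigma> permutes {..<m}" and ij: "i < m" "j < m" "i \<noteq> j"
    and fx: "\<And>k. k < m \<Longrightarrow> k \<noteq> i \<Longrightarrow> k \<noteq> j \<Longrightarrow> \<sigma> k = k"
  shows "\<sigma> = id \<or> \<sigma> = Transposition.transpose i j"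
proof -
  have inj: "\<And>a b. \<sigma> a = \<sigma> b \<Longrightarrow> a = b" using p by (meson permutes_inj injD)
  have out: "\<And>k. k \<ge> m \<Longrightarrow> \<sigma> k = k"
  proof -
    fix k :: nat assume "m \<le> k" then have "k \<notin> {..<m}" by simp
    then show "\<sigma> k = k" by (rule permutes_not_in[OF p])
  qed
  have ini: "\<sigma> i < m" using p ij by (meson lessThan_iff permutes_in_image)
  have inj': "\<sigma> j < m" using p ij by (meson lessThan_iff permutes_in_image)
  have si: "\<sigma> i = i \<or> \<sigma> i = j"
  proof (rule ccontr)
    assume "\<not> ?thesis"
    then have "\<sigma> (\<sigma> i) = \<sigma> i" using fx ini by auto
    then have "\<sigma> i = i" using inj by blast
    with \<open>\<not> ?thesis\<close> show False by simp
  qed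
  have sj: "\<sigma> j = i \<or> \<sigma> j = j"
  proof (rule ccontr)
    assume "\<not> ?thesis"
    then have "\<sigma> (\<sigma> j) = \<sigma> j" using fx inj' by auto
    then have "\<sigma> j = j" using inj by blast
    with \<open>\<not> ?thesis\<close> show False by simp
  qed
  show ?thesis
  proof (cases "\<sigma> i = i")
    case True
    then have "\<sigma> j = j" using sj inj ij by auto
    then have "\<sigma> = id" using True fx out by (intro ext) (metis id_apply not_le)
    then show ?thesis by simp
  next
    case False
    then have a: "\<sigma> i = j" using si by simp
    then have b: "\<sigma> j = i" using sj inj ij by auto
    have "\<sigma> = Transposition.transpose i j"
      using a b fx out by (intro ext) (metis not_le transpose_apply_first transpose_apply_other transpose_apply_second)
    then show ?thesis by simp
  qed
qed

lemma perm_fix_one: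
  fixes m i :: nat and \<sigma> :: "nat \<Rightarrow> nat"
  assumes p: "\<sigma> permutes {..<m}"
    and fx: "\<And>k. k < m \<Longrightarrow> k \<noteq> i \<Longrightarrow> \<sigma> k = k"
  shows "\<sigma> = id"
proof -
  have inj: "\<And>a b. \<sigma> a = \<sigma> b \<Longrightarrow> a = b" using p by (meson permutes_inj injD)
  have out: "\<And>k. k \<ge> m \<Longrightarrow> \<sigma> k = k"
  proof -
    fix k :: nat assume "m \<le> k" then have "k \<notin> {..<m}" by simp
    then show "\<sigma> k = k" by (rule permutes_not_in[OF p])
  qed
  have "\<sigma> i = i"
  proof (cases "i < m")
    case True
    have ini: "\<sigma> i < m" using p True by (meson lessThan_iff permutes_in_image)
    show ?thesis
    proof (rule ccontr)
      assume "\<sigma> i \<noteq> i"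
      then have "\<sigma> (\<sigma> i) = \<sigma> i" using fx ini by auto
      then show False using inj \<open>\<sigma> i \<noteq> i\<close> by blast
    qed
  qed (use out in auto)
  then show ?thesis using fx out by (intro ext) (metis id_apply not_le)
qed

definition lsum :: "nat \<Rightarrow> (nat \<Rightarrow> nat \<Rightarrow> real) \<Rightarrow> real" where
  "lsum m M = (\<Sum>\<sigma>\<in>{\<sigma>. \<sigma> permutes {..<m}}. of_int (sign \<sigma>) * (\<Prod>k<m. M k (\<sigma> k)))"

lemma lsum_restrict:
  assumes Q: "Q \<subseteq> {\<sigma>. \<sigma> permutes {..<m}}"
    and z: "\<And>\<sigma>. \<sigma> permutes {..<m} \<Longrightarrow> \<sigma> \<notin> Q \<Longrightarrow> (\<Prod>k<m. M k (\<sigma> k)) = 0"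
  shows "lsum m M = (\<Sum>\<sigma>\<in>Q. of_int (sign \<sigma>) * (\<Prod>k<m. M k (\<sigma> k)))"
  unfolding lsum_def
  by (rule sum.mono_neutral_right) (use Q z finite_permutations[of "{..<m}"] in auto)

lemma lsum_two:
  assumes ij: "i < m" "j < m" "i \<noteq> j"
    and M: "\<And>k l. k < m \<Longrightarrow> l < m \<Longrightarrow> k \<noteq> i \<Longrightarrow> k \<noteq> j \<Longrightarrow> M k l = (if k = l then 1 else 0)"
  shows "lsum m M = M i i * M j j - M i j * M j i"
proof -
  let ?t = "Transposition.transpose i j"
  have tp: "?t permutes {..<m}" using ij by (simp add: permutes_swap_id)
  have "lsum m M = (\<Sum>\<sigma>\<in>{id, ?t}. of_int (sign \<sigma>) * (\<Prod>k<m. M k (\<sigma> k)))"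
  proof (rule lsum_restrict)
    show "{id, ?t} \<subseteq> {\<sigma>. \<sigma> permutes {..<m}}" using tp permutes_id by auto
    fix \<sigma> assume p: "\<sigma> permutes {..<m}" and nq: "\<sigma> \<notin> {id, ?t}"
    then obtain k where k: "k < m" "k \<noteq> i" "k \<noteq> j" "\<sigma> k \<noteq> k"
      using perm_fix_two[OF p ij] by blast
    then have "M k (\<sigma> k) = 0" using M p permutes_in_image[of \<sigma> "{..<m}" k] by auto
    then show "(\<Prod>k<m. M k (\<sigma> k)) = 0" using k by (intro prod_zero) auto
  qed
  also have "\<dots> = (\<Prod>k<m. M k k) + (- (\<Prod>k<m. M k (?t k)))"
  proof -
    have "id \<noteq> ?t" using ij by (metis id_apply transpose_apply_first)
    then show ?thesis using ij by (subst sum.insert) (auto simp: sign_swap_id)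
  qed
  also have "(\<Prod>k<m. M k k) = M i i * M j j"
  proof -
    have "(\<Prod>k<m. M k k) = (\<Prod>k\<in>{i,j}. M k k) * (\<Prod>k\<in>{..<m}-{i,j}. M k k)"
      using ij by (subst prod.subset_diff[of "{i,j}"]) auto
    also have "(\<Prod>k\<in>{..<m}-{i,j}. M k k) = 1" using M by (intro prod.neutral) auto
    finally show ?thesis using ij by simp
  qed
  also have "(\<Prod>k<m. M k (?t k)) = M i j * M j i"
  proof -
    have "(\<Prod>k<m. M k (?t k)) = (\<Prod>k\<in>{i,j}. M k (?t k)) * (\<Prod>k\<in>{..<m}-{i,j}. M k (?t k))"
      using ij by (subst prod.subset_diff[of "{i,j}"]) auto
    also have "(\<Prod>k\<in>{..<m}-{i,j}. M k (?t k)) = 1" using M by (intro prod.neutral) auto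
    finally show ?thesis using ij by simp
  qed
  finally show ?thesis by simp
qed

lemma lsum_one:
  assumes M: "\<And>k l. k < m \<Longrightarrow> l < m \<Longrightarrow> k \<noteq> i \<Longrightarrow> M k l = (if k = l then 1 else 0)"
  shows "lsum m M = (if i < m then M i i else 1)"
proof -
  have "lsum m M = (\<Sum>\<sigma>\<in>{id}. of_int (sign \<sigma>) * (\<Prod>k<m. M k (\<sigma> k)))"
  proof (rule lsum_restrict)
    show "{id} \<subseteq> {\<sigma>. \<sigma> permutes {..<m}}" using permutes_id by auto
    fix \<sigma> assume p: "\<sigma> permutes {..<m}" and nq: "\<sigma> \<notin> {id}"
    then obtain k where k: "k < m" "k \<noteq> i" "\<sigma> k \<noteq> k"
      using perm_fix_one[OF p] by blast
    then have "M k (\<sigma> k) = 0" using M p permutes_in_image[of \<sigma> "{..<m}" k] by auto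
    then show "(\<Prod>k<m. M k (\<sigma> k)) = 0" using k by (intro prod_zero) auto
  qed
  also have "\<dots> = (\<Prod>k<m. M k k)" by simp
  also have "\<dots> = (if i < m then M i i else 1)"
  proof (cases "i < m")
    case True
    have "(\<Prod>k<m. M k k) = (\<Prod>k\<in>{i}. M k k) * (\<Prod>k\<in>{..<m}-{i}. M k k)"
      using True by (subst prod.subset_diff[of "{i}"]) auto
    also have "(\<Prod>k\<in>{..<m}-{i}. M k k) = 1" using M by (intro prod.neutral) auto
    finally show ?thesis using True by simp
  next
    case False
    then show ?thesis using M by (auto intro!: prod.neutral)
  qed
  finally show ?thesis .
qed

definition RR :: "nat \<Rightarrow> (nat \<Rightarrow> nat \<Rightarrow> real) \<Rightarrow> (nat \<Rightarrow> nat) \<Rightarrow> real" where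
  "RR m A \<iota> = lsum m (\<lambda>a b. A (\<iota> a) b)"

definition PP :: "nat \<Rightarrow> (nat \<Rightarrow> nat \<Rightarrow> real) \<Rightarrow> (nat \<Rightarrow> nat) \<Rightarrow> real" where
  "PP m A \<iota> = (\<Prod>a<m. A (\<iota> a) a)"

lemma RR_cong: "(\<And>a. a < m \<Longrightarrow> \<iota> a = \<iota>' a) \<Longrightarrow> RR m A \<iota> = RR m A \<iota>'"
  unfolding RR_def lsum_def by (intro sum.cong prod.cong refl) auto

lemma PP_cong: "(\<And>a. a < m \<Longrightarrow> \<iota> a = \<iota>' a) \<Longrightarrow> PP m A \<iota> = PP m A \<iota>'"
  unfolding PP_def by (intro prod.cong refl) auto

lemma RR_det: "RR m A \<iota> = det (mat m m (\<lambda>(a,b). A (\<iota> a) b))"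
proof -
  have "det (mat m m (\<lambda>(a,b). A (\<iota> a) b)) = (\<Sum>p\<in>{p. p permutes {0..<m}}.
     signof p * (\<Prod>i = 0..<m. (mat m m (\<lambda>(a,b). A (\<iota> a) b)) $$ (i, p i)))"
    by (rule det_def') simp
  also have "\<dots> = RR m A \<iota>"
    unfolding RR_def lsum_def atLeast0LessThan
  proof (intro sum.cong refl arg_cong2[where f="(*)"] prod.cong)
    fix p a assume p: "p \<in> {p. p permutes {..<m}}" and a: "a \<in> {..<m}"
    then have "p a < m" using permutes_in_image[of p "{..<m}" a] by simp
    then show "mat m m (\<lambda>(a,b). A (\<iota> a) b) $$ (a, p a) = A (\<iota> a) (p a)" using a by simp
  qed
  finally show ?thesis by simp
qed

lemma gram_expand:
  fixes A :: "nat \<Rightarrow> nat \<Rightarrow> real"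
  shows "det (transpose_mat (mat n m (\<lambda>(i,a). A i a)) * mat n m (\<lambda>(i,a). A i a))
     = (\<Sum>\<iota>\<in>PiE {..<m} (\<lambda>_. {..<n}). PP m A \<iota> * RR m A \<iota>)"
proof -
  let ?M = "mat n m (\<lambda>(i,a). A i a)"
  let ?G = "transpose_mat ?M * ?M"
  have G: "?G \<in> carrier_mat m m" by (intro carrier_matI) auto
  have entry: "?G $$ (a,b) = (\<Sum>i<n. A i a * A i b)" if "a < m" "b < m" for a b
    using that by (simp add: scalar_prod_def atLeast0LessThan)
  have "det ?G = (\<Sum>p\<in>{p. p permutes {0..<m}}. signof p * (\<Prod>i = 0..<m. ?G $$ (i, p i)))"
    by (rule det_def'[OF G])
  also have "\<dots> = (\<Sum>p\<in>{p. p permutes {..<m}}. of_int (sign p) * (\<Prod>a<m. \<Sum>i<n. A i a * A i (p a)))"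
    unfolding atLeast0LessThan
  proof (intro sum.cong refl arg_cong2[where f="(*)"] prod.cong)
    fix p a assume p: "p \<in> {p. p permutes {..<m}}" and a: "a \<in> {..<m}"
    then have "p a < m" using permutes_in_image[of p "{..<m}" a] by simp
    then show "?G $$ (a, p a) = (\<Sum>i<n. A i a * A i (p a))" using a entry by simp
  qed
  also have "\<dots> = (\<Sum>p\<in>{p. p permutes {..<m}}. of_int (sign p) *
        (\<Sum>\<iota>\<in>PiE {..<m} (\<lambda>_. {..<n}). \<Prod>a<m. A (\<iota> a) a * A (\<iota> a) (p a)))"
    by (subst prod_sum_PiE) auto
  also have "\<dots> = (\<Sum>\<iota>\<in>PiE {..<m} (\<lambda>_. {..<n}). \<Sum>p\<in>{p. p permutes {..<m}}. 
        PP m A \<iota> * (of_int (sign p) * (\<Prod>a<m. A (\<iota> a) (p a))))"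
    by (subst sum.swap) (simp add: sum_distrib_left PP_def prod.distrib mult_ac)
  also have "\<dots> = (\<Sum>\<iota>\<in>PiE {..<m} (\<lambda>_. {..<n}). PP m A \<iota> * RR m A \<iota>)"
    by (simp add: RR_def lsum_def sum_distrib_left)
  finally show ?thesis .
qed

lemma RR_noninj:
  assumes "\<not> inj_on \<iota> {..<m}"
  shows "RR m A \<iota> = 0"
proof -
  obtain a b where ab: "a < m" "b < m" "a \<noteq> b" "\<iota> a = \<iota> b"
    using assms unfolding inj_on_def by auto
  show ?thesis unfolding RR_det
    by (rule det_identical_rows[of _ m a b]) (use ab in auto)
qed

lemma perm_lt: "\<tau> permutes {..<m} \<Longrightarrow> (a::nat) < m \<Longrightarrow> \<tau> a < m"
  using permutes_in_image[of \<tau> "{..<m}" a] by simp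

lemma RR_perm:
  assumes t: "\<tau> permutes {..<m}"
  shows "RR m A (\<iota> \<circ> \<tau>) = of_int (sign \<tau>) * RR m A \<iota>"
proof -
  let ?M = "mat m m (\<lambda>(a,b). A (\<iota> a) b)"
  have t0: "\<tau> permutes {0..<m}" using t by (simp add: atLeast0LessThan)
  have "det (mat m m (\<lambda>(i,j). ?M $$ (\<tau> i, j))) = signof \<tau> * det ?M"
    by (rule det_permute_rows[OF _ t0]) simp
  moreover have "mat m m (\<lambda>(i,j). ?M $$ (\<tau> i, j)) = mat m m (\<lambda>(a,b). A ((\<iota> \<circ> \<tau>) a) b)"
    by (rule eq_matI) (auto simp: perm_lt[OF t])
  ultimately show ?thesis by (simp add: RR_det)
qed

lemma sum_sign_PP:
  "(\<Sum>\<tau>\<in>{\<tau>. \<tau> permutes {..<m}}. of_int (sign \<tau>) * PP m A (\<iota> \<circ> \<tau>)) = RR m A \<iota>"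
proof -
  let ?M = "mat m m (\<lambda>(a,b). A (\<iota> a) b)"
  have "det (transpose_mat ?M) = det ?M" by (rule det_transpose[of _ m]) simp
  moreover have "det (transpose_mat ?M) = (\<Sum>p\<in>{p. p permutes {0..<m}}.
     signof p * (\<Prod>i = 0..<m. (transpose_mat ?M) $$ (i, p i)))"
    by (rule det_def') simp
  moreover have "\<dots> = (\<Sum>\<tau>\<in>{\<tau>. \<tau> permutes {..<m}}. of_int (sign \<tau>) * PP m A (\<iota> \<circ> \<tau>))"
    unfolding atLeast0LessThan PP_def
  proof (intro sum.cong refl arg_cong2[where f="(*)"] prod.cong)
    fix p a assume p: "p \<in> {p. p permutes {..<m}}" and a: "a \<in> {..<m}"
    then have "p a < m" using perm_lt by auto
    then show "transpose_mat ?M $$ (a, p a) = A ((\<iota> \<circ> p) a) a" using a by simp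
  qed
  ultimately show ?thesis by (simp add: RR_det)
qed

lemma sum_reindex_perm:
  fixes m n :: nat
  assumes t: "\<tau> permutes {..<m}"
    and g: "\<And>\<iota> \<iota>'. (\<And>a. a < m \<Longrightarrow> \<iota> a = \<iota>' a) \<Longrightarrow> g \<iota> = g \<iota>'"
  shows "(\<Sum>\<iota>\<in>PiE {..<m} (\<lambda>_. {..<n}). g (\<iota> \<circ> \<tau>)) = (\<Sum>\<iota>\<in>PiE {..<m} (\<lambda>_. {..<n}). (g \<iota> :: real))"
proof (rule sum.reindex_bij_witness[where i="\<lambda>\<iota>. restrict (\<iota> \<circ> Hilbert_Choice.inv \<tau>) {..<m}"
                                        and j="\<lambda>\<iota>. restrict (\<iota> \<circ> \<tau>) {..<m}"])
  have ti: "Hilbert_Choice.inv \<tau> permutes {..<m}" using t by (rule permutes_inv)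
  fix a assume a: "a \<in> PiE {..<m} (\<lambda>_. {..<n})"
  show "restrict (restrict (a \<circ> \<tau>) {..<m} \<circ> Hilbert_Choice.inv \<tau>) {..<m} = a"
  proof (rule ext)
    fix x show "restrict (restrict (a \<circ> \<tau>) {..<m} \<circ> Hilbert_Choice.inv \<tau>) {..<m} x = a x"
      using a perm_lt[OF ti, of x] permutes_inverses(1)[OF t] by (cases "x < m") (auto simp: PiE_def extensional_def)
  qed
  show "restrict (a \<circ> \<tau>) {..<m} \<in> PiE {..<m} (\<lambda>_. {..<n})"
    using a perm_lt[OF t] by (auto simp: PiE_def Pi_def)
  show "g (restrict (a \<circ> \<tau>) {..<m}) = g (a \<circ> \<tau>)" by (rule g) simp
next
  have ti: "Hilbert_Choice.inv \<tau> permutes {..<m}" using t by (rule permutes_inv)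
  fix b assume b: "b \<in> PiE {..<m} (\<lambda>_. {..<n})"
  show "restrict (restrict (b \<circ> Hilbert_Choice.inv \<tau>) {..<m} \<circ> \<tau>) {..<m} = b"
  proof (rule ext)
    fix x show "restrict (restrict (b \<circ> Hilbert_Choice.inv \<tau>) {..<m} \<circ> \<tau>) {..<m} x = b x"
      using b perm_lt[OF t, of x] permutes_inverses(2)[OF t] by (cases "x < m") (auto simp: PiE_def extensional_def)
  qed
  show "restrict (b \<circ> Hilbert_Choice.inv \<tau>) {..<m} \<in> PiE {..<m} (\<lambda>_. {..<n})"
    using b perm_lt[OF ti] by (auto simp: PiE_def Pi_def)
qed

lemma gram_fact:
  fixes A :: "nat \<Rightarrow> nat \<Rightarrow> real"
  shows "fact m * det (transpose_mat (mat n m (\<lambda>(i,a). A i a)) * mat n m (\<lambda>(i,a). A i a))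
     = (\<Sum>\<iota>\<in>PiE {..<m} (\<lambda>_. {..<n}). (RR m A \<iota>)^2)"
proof -
  let ?P = "PiE {..<m} (\<lambda>_. {..<n})"
  let ?T = "{\<tau>. \<tau> permutes ({..<m}::nat set)}"
  let ?D = "det (transpose_mat (mat n m (\<lambda>(i,a). A i a)) * mat n m (\<lambda>(i,a). A i a))"
  have D: "?D = (\<Sum>\<iota>\<in>?P. PP m A \<iota> * RR m A \<iota>)" by (rule gram_expand)
  have Dt: "?D = (\<Sum>\<iota>\<in>?P. of_int (sign \<tau>) * PP m A (\<iota> \<circ> \<tau>) * RR m A \<iota>)" if t: "\<tau> \<in> ?T" for \<tau>
  proof -
    have "?D = (\<Sum>\<iota>\<in>?P. PP m A (\<iota> \<circ> \<tau>) * RR m A (\<iota> \<circ> \<tau>))"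
      unfolding D
      by (rule sum_reindex_perm[symmetric]) (use t in \<open>auto intro!: arg_cong2[where f="(*)"] PP_cong RR_cong\<close>)
    also have "\<dots> = (\<Sum>\<iota>\<in>?P. of_int (sign \<tau>) * PP m A (\<iota> \<circ> \<tau>) * RR m A \<iota>)"
      using t by (intro sum.cong refl) (simp add: RR_perm)
    finally show ?thesis .
  qed
  have "fact m * ?D = (\<Sum>\<tau>\<in>?T. ?D)"
    using card_permutations[of "{..<m}" m] by simp
  also have "\<dots> = (\<Sum>\<tau>\<in>?T. \<Sum>\<iota>\<in>?P. of_int (sign \<tau>) * PP m A (\<iota> \<circ> \<tau>) * RR m A \<iota>)"
    using Dt by (intro sum.cong refl) auto
  also have "\<dots> = (\<Sum>\<iota>\<in>?P. (\<Sum>\<tau>\<in>?T. of_int (sign \<tau>) * PP m A (\<iota> \<circ> \<tau>)) * RR m A \<iota>)"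
    by (subst sum.swap) (simp add: sum_distrib_right)
  also have "\<dots> = (\<Sum>\<iota>\<in>?P. (RR m A \<iota>)^2)"
    by (simp add: sum_sign_PP power2_eq_square)
  finally show ?thesis .
qed

lemma gram_nonneg:
  fixes A :: "nat \<Rightarrow> nat \<Rightarrow> real"
  shows "0 \<le> det (transpose_mat (mat n m (\<lambda>(i,a). A i a)) * mat n m (\<lambda>(i,a). A i a))"
proof -
  have "0 \<le> fact m * det (transpose_mat (mat n m (\<lambda>(i,a). A i a)) * mat n m (\<lambda>(i,a). A i a))"
    unfolding gram_fact by (intro sum_nonneg) auto
  moreover have "(0::real) < fact m" by simp
  ultimately show ?thesis by (metis zero_le_mult_iff not_less)
qed

lemma card_inj_PiE:
  fixes m n :: nat
  assumes "m \<le> n"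
  shows "card {\<iota>\<in>PiE {..<m} (\<lambda>_. {..<n}). inj_on \<iota> {..<m}} = \<Prod>{n - m + 1..n}"
proof -
  let ?S = "{\<iota>\<in>PiE {..<m} (\<lambda>_. {..<n}). inj_on \<iota> {..<m}}"
  let ?L = "{xs. length xs = m \<and> distinct xs \<and> set xs \<subseteq> {..<n}}"
  have "bij_betw (\<lambda>\<iota>. map \<iota> [0..<m]) ?S ?L"
  proof (rule bij_betwI')
    fix x y assume x: "x \<in> ?S" and y: "y \<in> ?S"
    show "(map x [0..<m] = map y [0..<m]) = (x = y)"
    proof
      assume "map x [0..<m] = map y [0..<m]"
      then have "\<forall>a<m. x a = y a" by (simp add: map_eq_conv)
      then show "x = y" using x y by (intro PiE_ext[of _ "{..<m}" "\<lambda>_. {..<n}"]) auto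
    qed simp
  next
    fix x assume x: "x \<in> ?S"
    then show "map x [0..<m] \<in> ?L"
      by (auto simp: distinct_map PiE_def Pi_def atLeast0LessThan)
  next
    fix xs assume xs: "xs \<in> ?L"
    let ?i = "restrict (\<lambda>a. xs ! a) {..<m}"
    have mp: "map ?i [0..<m] = xs" using xs by (intro nth_equalityI) auto
    have "?i \<in> PiE {..<m} (\<lambda>_. {..<n})"
    proof -
      have "xs ! a < n" if "a < m" for a
      proof -
        have "xs ! a \<in> set xs" using xs that by simp
        moreover have "set xs \<subseteq> {..<n}" using xs by simp
        ultimately show ?thesis by (meson lessThan_iff subsetD)
      qed
      then show ?thesis by (simp add: restrict_PiE_iff)
    qed
    moreover have "inj_on ?i {..<m}"
    proof -
      have "distinct (map ?i [0..<m])" using mp xs by simp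
      then have "inj_on ?i (set [0..<m])" by (simp only: distinct_map)
      then show ?thesis by (simp add: atLeast0LessThan)
    qed
    ultimately show "\<exists>x\<in>?S. xs = map x [0..<m]" using mp by (intro bexI[of _ ?i]) auto
  qed
  then have "card ?S = card ?L" by (rule bij_betw_same_card)
  also have "\<dots> = \<Prod>{n - m + 1..n}" using card_lists_distinct_length_eq[of "{..<n}" m] assms by simp
  finally show ?thesis .
qed

lemma card_inj_PiE_real:
  fixes m n :: nat
  assumes "m \<le> n"
  shows "real (card {\<iota>\<in>PiE {..<m} (\<lambda>_. {..<n}). inj_on \<iota> {..<m}}) = fact n / fact (n - m)"
proof -
  have "fact n div fact (n - m) = (\<Prod>{n - m + 1..n} :: nat)"
    using fact_div_fact[of "n - m" n] assms by simp
  moreover have "(fact (n - m) :: nat) dvd fact n" by (rule fact_dvd) simp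
  ultimately have "(fact n :: nat) = fact (n - m) * \<Prod>{n - m + 1..n}" by (metis dvd_mult_div_cancel)
  then have "(fact n :: real) = fact (n - m) * real (\<Prod>{n - m + 1..n})"
    by (metis of_nat_fact of_nat_mult)
  then show ?thesis unfolding card_inj_PiE[OF assms] by simp
qed

lemma abs_le_1_sq: "\<bar>t::real\<bar> \<le> 1 + t^2"
proof -
  have "0 \<le> (\<bar>t\<bar> - 1)^2" by simp
  then show ?thesis by (simp add: power2_eq_square algebra_simps)
qed

lemma perm_extend:
  fixes \<iota> :: "nat \<Rightarrow> nat" and m n :: nat
  assumes inj: "inj_on \<iota> {..<m}" and im: "\<iota> ` {..<m} \<subseteq> {..<n}" and mn: "m \<le> n"
  shows "\<exists>\<pi>. \<pi> permutes {..<n} \<and> (\<forall>a<m. \<pi> a = \<iota> a)"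
proof -
  let ?A = "{m..<n}" and ?B = "{..<n} - \<iota> ` {..<m}"
  have cA: "card ?A = n - m" by simp
  have "card (\<iota> ` {..<m}) = m" using inj by (simp add: card_image)
  then have cB: "card ?B = n - m" using im by (simp add: card_Diff_subset)
  obtain h where h: "bij_betw h ?A ?B" using finite_same_card_bij[of ?A ?B] cA cB by auto
  define \<pi> where "\<pi> k = (if k < m then \<iota> k else if k < n then h k else k)" for k
  have img: "\<pi> ` {..<n} = {..<n}"
  proof
    show "\<pi> ` {..<n} \<subseteq> {..<n}"
    proof
      fix z assume "z \<in> \<pi> ` {..<n}"
      then obtain k where k: "k < n" "z = \<pi> k" by auto
      show "z \<in> {..<n}"
      proof (cases "k < m")
        case True then show ?thesis using k im by (auto simp: \<pi>_def)
      next
        case False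
        then have "h k \<in> ?B" using h k bij_betwE by fastforce
        then show ?thesis using k False by (auto simp: \<pi>_def)
      qed
    qed
    show "{..<n} \<subseteq> \<pi> ` {..<n}"
    proof
      fix z assume z: "z \<in> {..<n}"
      show "z \<in> \<pi> ` {..<n}"
      proof (cases "z \<in> \<iota> ` {..<m}")
        case True
        then obtain a where "a < m" "z = \<iota> a" by auto
        then show ?thesis using mn by (intro image_eqI[of _ _ a]) (auto simp: \<pi>_def)
      next
        case False
        then have "z \<in> ?B" using z by auto
        then obtain k where "k \<in> ?A" "z = h k" using h by (metis bij_betw_imp_surj_on imageE)
        then show ?thesis by (intro image_eqI[of _ _ k]) (auto simp: \<pi>_def)
      qed
    qed
  qed
  have "inj_on \<pi> {..<n}" using img by (intro eq_card_imp_inj_on) auto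
  then have "bij_betw \<pi> {..<n} {..<n}" using img by (simp add: bij_betw_def)
  then have "\<pi> permutes {..<n}" by (rule bij_imp_permutes) (use mn in \<open>auto simp: \<pi>_def\<close>)
  then show ?thesis by (intro exI[of _ \<pi>]) (auto simp: \<pi>_def)
qed

locale core =
  fixes N :: "'a measure" and m n :: nat and u :: "nat \<Rightarrow> 'a \<Rightarrow> real"
    and y :: "'a \<Rightarrow> real" and B :: real
  assumes prob: "prob_space N"
    and u_meas[measurable]: "\<And>a. u a \<in> borel_measurable N"
    and y_meas[measurable]: "y \<in> borel_measurable N"
    and orth: "\<And>a b. a < m \<Longrightarrow> b < m \<Longrightarrow> (\<integral>z. u a z * u b z \<partial>N) = (if a = b then 1 else 0)"
    and Kbound: "AE z in N. (\<Sum>a<m. (u a z)^2) \<le> B"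
    and B1: "1 \<le> B"
    and y2: "integrable N (\<lambda>z. (y z)^2)"
    and mn: "m \<le> n"
begin

definition g :: "nat \<Rightarrow> 'a \<Rightarrow> real" where "g c z = u c z * y z"
definition K :: "'a \<Rightarrow> real" where "K z = (\<Sum>a<m. (u a z)^2)"
abbreviation PN where "PN \<equiv> PiM {..<n} (\<lambda>_. N)"

lemma g_meas[measurable]: "g c \<in> borel_measurable N" unfolding g_def by measurable
lemma K_meas[measurable]: "K \<in> borel_measurable N" unfolding K_def by measurable

interpretation N: prob_space N by (rule prob)
interpretation PS: product_sigma_finite "\<lambda>_::nat. N"
  by (simp add: product_sigma_finite_def N.sigma_finite_measure_axioms)

lemma PN_prob: "prob_space PN"
  by (rule prob_space_PiM) (rule prob)

lemma abs_u: "AE z in N. \<forall>a<m. \<bar>u a z\<bar> \<le> sqrt B"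
  using Kbound
proof (rule eventually_mono)
  fix z assume K: "(\<Sum>a<m. (u a z)^2) \<le> B"
  show "\<forall>a<m. \<bar>u a z\<bar> \<le> sqrt B"
  proof (intro allI impI)
    fix a assume a: "a < m"
    have "(u a z)^2 \<le> (\<Sum>a<m. (u a z)^2)"
      using a by (intro member_le_sum) auto
    then have "(u a z)^2 \<le> B" using K by linarith
    then show "\<bar>u a z\<bar> \<le> sqrt B" using real_le_rsqrt by (metis real_sqrt_abs real_sqrt_le_mono)
  qed
qed

lemma int_dom:
  assumes f: "f \<in> borel_measurable N" and b: "AE z in N. \<bar>f z\<bar> \<le> C * (1 + (y z)^2)"
  shows "integrable N f"
proof (rule Bochner_Integration.integrable_bound)
  show "integrable N (\<lambda>z. \<bar>C\<bar> * (1 + (y z)^2))"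
    using y2 by (intro integrable_mult_right Bochner_Integration.integrable_add) auto
  show "AE z in N. norm (f z) \<le> norm (\<bar>C\<bar> * (1 + (y z)^2))"
    using b
  proof (rule eventually_mono)
    fix z assume "\<bar>f z\<bar> \<le> C * (1 + (y z)^2)"
    moreover have "C * (1 + (y z)^2) \<le> \<bar>C\<bar> * (1 + (y z)^2)"
      by (intro mult_right_mono) auto
    ultimately show "norm (f z) \<le> norm (\<bar>C\<bar> * (1 + (y z)^2))" by simp
  qed
qed (use f in auto)

definition hh :: "(nat \<Rightarrow> nat) \<Rightarrow> nat \<Rightarrow> nat \<Rightarrow> nat \<Rightarrow> nat \<Rightarrow> 'a \<Rightarrow> real" where
  "hh \<sigma> c i j k z = (if k < m then u k z * u (\<sigma> k) z else 1) *
      ((if k = i then g c z else 1) * (if k = j then g c z else 1))"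

lemma hh_meas[measurable]: "hh \<sigma> c i j k \<in> borel_measurable N"
  unfolding hh_def by measurable

lemma hh_int:
  assumes c: "c < m" and s: "\<sigma> permutes {..<m}"
  shows "integrable N (hh \<sigma> c i j k)"
proof (rule int_dom)
  show "AE z in N. \<bar>hh \<sigma> c i j k z\<bar> \<le> (B * (B + sqrt B + 1)) * (1 + (y z)^2)"
    using abs_u
  proof (rule eventually_mono)
    fix z assume u: "\<forall>a<m. \<bar>u a z\<bar> \<le> sqrt B"
    have sB: "0 \<le> sqrt B" "sqrt B * sqrt B = B" using B1 by auto
    have uu: "\<bar>if k < m then u k z * u (\<sigma> k) z else 1\<bar> \<le> B"
    proof (cases "k < m")
      case True
      then have "\<sigma> k < m" using s perm_lt by blast
      then have "\<bar>u k z * u (\<sigma> k) z\<bar> \<le> sqrt B * sqrt B"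
        unfolding abs_mult using u True B1 by (intro mult_mono) auto
      then show ?thesis using True sB by simp
    qed (use B1 in auto)
    have gc: "\<bar>g c z\<bar> \<le> sqrt B * \<bar>y z\<bar>"
      unfolding g_def abs_mult using u c by (intro mult_right_mono) auto
    have gg: "\<bar>g c z\<bar> * \<bar>g c z\<bar> \<le> B * (y z)^2"
    proof -
      have "\<bar>g c z\<bar> * \<bar>g c z\<bar> \<le> (sqrt B * \<bar>y z\<bar>) * (sqrt B * \<bar>y z\<bar>)"
        using gc by (intro mult_mono) auto
      also have "\<dots> = B * (y z)^2" using sB by (simp add: power2_eq_square algebra_simps)
      finally show ?thesis .
    qed
    have y1: "\<bar>y z\<bar> \<le> 1 + (y z)^2" by (rule abs_le_1_sq)
    have ee: "\<bar>(if k = i then g c z else 1) * (if k = j then g c z else 1)\<bar> \<le> (B + sqrt B + 1) * (1 + (y z)^2)"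
    proof -
      have "(y z)^2 \<ge> 0" by simp
      have a1: "B * (y z)^2 \<le> (B + sqrt B + 1) * (1 + (y z)^2)"
        using sB B1 \<open>(y z)^2 \<ge> 0\<close> by (simp add: algebra_simps)
      have a2: "sqrt B * \<bar>y z\<bar> \<le> (B + sqrt B + 1) * (1 + (y z)^2)"
      proof -
        have "sqrt B * \<bar>y z\<bar> \<le> sqrt B * (1 + (y z)^2)" using y1 sB by (intro mult_left_mono) auto
        also have "\<dots> \<le> (B + sqrt B + 1) * (1 + (y z)^2)"
          using B1 \<open>(y z)^2 \<ge> 0\<close> by (intro mult_right_mono) auto
        finally show ?thesis .
      qed
      have a3: "1 \<le> (B + sqrt B + 1) * (1 + (y z)^2)"
        using B1 sB \<open>(y z)^2 \<ge> 0\<close> by (simp add: algebra_simps)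
      show ?thesis
        using a1 a2 a3 gg gc by (auto simp: abs_mult)
    qed
    have "\<bar>hh \<sigma> c i j k z\<bar> \<le> B * ((B + sqrt B + 1) * (1 + (y z)^2))"
      unfolding hh_def abs_mult[of "if k < m then _ else _"]
      using B1 by (intro mult_mono[OF uu ee]) auto
    then show "\<bar>hh \<sigma> c i j k z\<bar> \<le> (B * (B + sqrt B + 1)) * (1 + (y z)^2)" by (simp add: mult_ac)
  qed
qed simp

definition Vf :: "(nat \<Rightarrow> nat) \<Rightarrow> nat \<Rightarrow> nat \<Rightarrow> nat \<Rightarrow> (nat \<Rightarrow> 'a) \<Rightarrow> real" where
  "Vf \<sigma> c i j x = g c (x i) * g c (x j) * (\<Prod>a<m. u a (x a) * u (\<sigma> a) (x a))"

lemma Vf_prod: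
  assumes "i < n" "j < n"
  shows "Vf \<sigma> c i j x = (\<Prod>k<n. hh \<sigma> c i j k (x k))"
proof -
  have "(\<Prod>k<n. hh \<sigma> c i j k (x k)) = (\<Prod>k<n. (if k < m then u k (x k) * u (\<sigma> k) (x k) else 1)) *
      ((\<Prod>k<n. (if k = i then g c (x k) else 1)) * (\<Prod>k<n. (if k = j then g c (x k) else 1)))"
    unfolding hh_def by (simp add: prod.distrib)
  also have "(\<Prod>k<n. (if k = i then g c (x k) else 1)) = g c (x i)"
    using assms by (subst prod.delta) auto
  also have "(\<Prod>k<n. (if k = j then g c (x k) else 1)) = g c (x j)"
    using assms by (subst prod.delta) auto
  also have "(\<Prod>k<n. (if k < m then u k (x k) * u (\<sigma> k) (x k) else 1)) = (\<Prod>a<m. u a (x a) * u (\<sigma> a) (x a))"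
    using mn by (intro prod.mono_neutral_cong_right) auto
  finally show ?thesis unfolding Vf_def by (simp add: mult_ac)
qed

lemma Vf_int:
  assumes "i < n" "j < n" "c < m" "\<sigma> permutes {..<m}"
  shows "integrable PN (Vf \<sigma> c i j)"
proof -
  have "integrable PN (\<lambda>x. \<Prod>k<n. hh \<sigma> c i j k (x k))"
    using assms by (intro PS.product_integrable_prod hh_int) auto
  moreover have "Vf \<sigma> c i j = (\<lambda>x. \<Prod>k<n. hh \<sigma> c i j k (x k))"
    using Vf_prod[OF assms(1,2)] by (intro ext) simp
  ultimately show ?thesis by simp
qed

lemma Vf_integral:
  assumes "i < n" "j < n" "c < m" "\<sigma> permutes {..<m}"
  shows "(\<integral>x. Vf \<sigma> c i j x \<partial>PN) = (\<Prod>k<n. \<integral>z. hh \<sigma> c i j k z \<partial>N)"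
proof -
  have "(\<integral>x. Vf \<sigma> c i j x \<partial>PN) = (\<integral>x. (\<Prod>k<n. hh \<sigma> c i j k (x k)) \<partial>PN)"
    using Vf_prod[OF assms(1,2)] by simp
  also have "\<dots> = (\<Prod>k<n. \<integral>z. hh \<sigma> c i j k z \<partial>N)"
    using assms by (intro PS.product_integral_prod hh_int) auto
  finally show ?thesis .
qed

definition ee :: "nat \<Rightarrow> nat \<Rightarrow> nat \<Rightarrow> nat \<Rightarrow> 'a \<Rightarrow> real" where
  "ee c i j k z = (if k = i then g c z else 1) * (if k = j then g c z else 1)"

definition MM :: "nat \<Rightarrow> nat \<Rightarrow> nat \<Rightarrow> nat \<Rightarrow> nat \<Rightarrow> real" where
  "MM c i j k l = (\<integral>z. u k z * u l z * ee c i j k z \<partial>N)"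

definition QQ :: "nat \<Rightarrow> nat \<Rightarrow> nat \<Rightarrow> real" where
  "QQ c i j = (\<Prod>k\<in>{m..<n}. \<integral>z. ee c i j k z \<partial>N)"

lemma sum_Vf:
  assumes "i < n" "j < n" "c < m"
  shows "(\<Sum>\<sigma>\<in>{\<sigma>. \<sigma> permutes {..<m}}. of_int (sign \<sigma>) * (\<integral>x. Vf \<sigma> c i j x \<partial>PN))
     = lsum m (MM c i j) * QQ c i j"
proof -
  have "(\<integral>x. Vf \<sigma> c i j x \<partial>PN) = (\<Prod>k<m. MM c i j k (\<sigma> k)) * QQ c i j"
    if s: "\<sigma> permutes {..<m}" for \<sigma>
  proof -
    have "(\<integral>x. Vf \<sigma> c i j x \<partial>PN) = (\<Prod>k<n. \<integral>z. hh \<sigma> c i j k z \<partial>N)"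
      using Vf_integral assms s by blast
    also have "\<dots> = (\<Prod>k\<in>{0..<m}. \<integral>z. hh \<sigma> c i j k z \<partial>N) * (\<Prod>k\<in>{m..<n}. \<integral>z. hh \<sigma> c i j k z \<partial>N)"
      using mn by (simp add: prod.atLeastLessThan_concat atLeast0LessThan[symmetric])
    also have "(\<Prod>k\<in>{0..<m}. \<integral>z. hh \<sigma> c i j k z \<partial>N) = (\<Prod>k<m. MM c i j k (\<sigma> k))"
      unfolding atLeast0LessThan MM_def hh_def ee_def by (intro prod.cong refl) (simp add: mult_ac)
    also have "(\<Prod>k\<in>{m..<n}. \<integral>z. hh \<sigma> c i j k z \<partial>N) = QQ c i j"
      unfolding QQ_def hh_def ee_def by (intro prod.cong refl) simp
    finally show ?thesis .
  qed
  then show ?thesis unfolding lsum_def sum_distrib_right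
    by (intro sum.cong refl) (simp add: mult_ac)
qed

definition G1 :: "nat \<Rightarrow> nat \<Rightarrow> nat \<Rightarrow> real" where
  "G1 c a b = (\<integral>z. u a z * u b z * g c z \<partial>N)"
definition G2 :: "nat \<Rightarrow> nat \<Rightarrow> real" where
  "G2 c a = (\<integral>z. u a z * u a z * (g c z * g c z) \<partial>N)"
definition pc :: "nat \<Rightarrow> real" where
  "pc c = (\<integral>z. g c z \<partial>N)"
definition qc :: "nat \<Rightarrow> real" where
  "qc c = (\<integral>z. g c z * g c z \<partial>N)"

lemma int_one: "(\<integral>z. 1 \<partial>N) = (1::real)"
  using prob_space.prob_space[OF prob] by simp

lemma MM_other: "k < m \<Longrightarrow> l < m \<Longrightarrow> k \<noteq> i \<Longrightarrow> k \<noteq> j \<Longrightarrow> MM c i j k l = (if k = l then 1 else 0)"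
  unfolding MM_def ee_def by (simp add: orth)

lemma QQ_eq: "QQ c i i = (if m \<le> i \<and> i < n then qc c else 1)"
proof -
  have "QQ c i i = (\<Prod>k\<in>{m..<n}. if k = i then qc c else 1)"
    unfolding QQ_def ee_def qc_def by (intro prod.cong refl) (simp add: int_one del: lebesgue_integral_const)
  then show ?thesis by (simp add: prod.delta)
qed

lemma QQ_neq:
  assumes "i \<noteq> j"
  shows "QQ c i j = (if m \<le> i \<and> i < n then pc c else 1) * (if m \<le> j \<and> j < n then pc c else 1)"
proof -
  have "QQ c i j = (\<Prod>k\<in>{m..<n}. (if k = i then pc c else 1) * (if k = j then pc c else 1))"
    unfolding QQ_def ee_def pc_def using assms by (intro prod.cong refl) (auto simp: int_one simp del: lebesgue_integral_const)
  then show ?thesis by (simp add: prod.distrib prod.delta)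
qed

definition Tv :: "nat \<Rightarrow> nat \<Rightarrow> nat \<Rightarrow> real" where
  "Tv c i j = (if i = j then (if i < m then G2 c i else qc c)
    else if i < m \<and> j < m then G1 c i i * G1 c j j - G1 c i j * G1 c j i
    else if i < m then G1 c i i * pc c
    else if j < m then G1 c j j * pc c
    else pc c * pc c)"

lemma T_val:
  assumes i: "i < n" and j: "j < n"
  shows "lsum m (MM c i j) * QQ c i j = Tv c i j"
proof (cases "i = j")
  case True
  have l: "lsum m (MM c i j) = (if i < m then MM c i j i i else 1)"
    by (rule lsum_one) (use True MM_other in auto)
  show ?thesis
    using True i l QQ_eq[of c i] by (auto simp: Tv_def MM_def ee_def G2_def mult_ac)
next
  case False
  note ij = False
  show ?thesis
  proof (cases "i < m \<and> j < m")
    case True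
    have "lsum m (MM c i j) = MM c i j i i * MM c i j j j - MM c i j i j * MM c i j j i"
      by (rule lsum_two) (use True ij MM_other in auto)
    then show ?thesis using True ij QQ_neq[OF ij, of c]
      by (auto simp: Tv_def MM_def ee_def G1_def mult_ac)
  next
    case False
    note nb = False
    show ?thesis
    proof (cases "i < m")
      case True
      have "lsum m (MM c i j) = (if i < m then MM c i j i i else 1)"
        by (rule lsum_one) (use True ij nb MM_other in auto)
      then show ?thesis using True nb ij j QQ_neq[OF ij, of c]
        by (auto simp: Tv_def MM_def ee_def G1_def mult_ac)
    next
      case False
      note ni = False
      show ?thesis
      proof (cases "j < m")
        case True
        have "lsum m (MM c i j) = (if j < m then MM c i j j j else 1)"
          by (rule lsum_one) (use True ij nb MM_other in auto)
        then show ?thesis using True ni ij i QQ_neq[OF ij, of c]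
          by (auto simp: Tv_def MM_def ee_def G1_def mult_ac)
      next
        case False
        have "lsum m (MM c i j) = (if i < m then MM c i j i i else 1)"
          by (rule lsum_one) (use ni \<open>\<not> j < m\<close> MM_other in auto)
        then show ?thesis using False ni ij i j QQ_neq[OF ij, of c]
          by (auto simp: Tv_def)
      qed
    qed
  qed
qed

lemma G1_sym: "G1 c a b = G1 c b a"
  unfolding G1_def by (simp add: mult_ac)

lemma sum_if_eq:
  fixes a :: real
  assumes "finite S" "i \<in> S"
  shows "(\<Sum>j\<in>S. if i = j then a else b j) = (\<Sum>j\<in>S. b j) + (a - b i)"
proof -
  have "(\<Sum>j\<in>S. if i = j then a else b j) = (\<Sum>j\<in>S. b j + (if i = j then a - b i else 0))"
    by (intro sum.cong refl) auto
  also have "\<dots> = (\<Sum>j\<in>S. b j) + (a - b i)"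
    using assms by (simp add: sum.distrib)
  finally show ?thesis .
qed

lemma split_n: "(\<Sum>i<n. F i) = (\<Sum>i<m. F i) + (\<Sum>i\<in>{m..<n}. (F i :: real))"
  using mn by (simp add: sum.atLeastLessThan_concat atLeast0LessThan[symmetric])

lemma Tsum_c:
  "(\<Sum>i<n. \<Sum>j<n. Tv c i j) =
     (\<Sum>i<m. G2 c i) + real (n - m) * qc c + (\<Sum>i<m. G1 c i i)^2 - (\<Sum>i<m. \<Sum>j<m. (G1 c i j)^2)
     + 2 * real (n - m) * (\<Sum>i<m. G1 c i i) * pc c + real (n - m) * (real (n - m) - 1) * (pc c)^2"
proof -
  let ?S2 = "{m..<n}"
  have c2: "card ?S2 = n - m" by simp
  have b11: "(\<Sum>i<m. \<Sum>j<m. Tv c i j) = (\<Sum>i<m. G2 c i) + (\<Sum>i<m. G1 c i i)^2 - (\<Sum>i<m. \<Sum>j<m. (G1 c i j)^2)"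
  proof -
    have "(\<Sum>i<m. \<Sum>j<m. Tv c i j) = (\<Sum>i<m. \<Sum>j<m. if i = j then G2 c i else G1 c i i * G1 c j j - G1 c i j * G1 c j i)"
      unfolding Tv_def by (intro sum.cong refl) auto
    also have "\<dots> = (\<Sum>i<m. (\<Sum>j<m. G1 c i i * G1 c j j - G1 c i j * G1 c j i) + (G2 c i - (G1 c i i * G1 c i i - G1 c i i * G1 c i i)))"
      by (intro sum.cong refl sum_if_eq) auto
    also have "\<dots> = (\<Sum>i<m. G2 c i) + (\<Sum>i<m. G1 c i i)^2 - (\<Sum>i<m. \<Sum>j<m. (G1 c i j)^2)"
      by (simp add: sum.distrib sum_subtractf power2_eq_square sum_distrib_left sum_distrib_right G1_sym[of c _ "_"]) (rule sum.swap)
    finally show ?thesis .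
  qed
  have b12: "(\<Sum>i<m. \<Sum>j\<in>?S2. Tv c i j) = real (n - m) * (\<Sum>i<m. G1 c i i) * pc c"
  proof -
    have "(\<Sum>i<m. \<Sum>j\<in>?S2. Tv c i j) = (\<Sum>i<m. \<Sum>j\<in>?S2. G1 c i i * pc c)"
      unfolding Tv_def by (intro sum.cong refl) auto
    then show ?thesis using c2 by (simp add: sum_distrib_right sum_distrib_left[symmetric] mult_ac)
  qed
  have b21: "(\<Sum>i\<in>?S2. \<Sum>j<m. Tv c i j) = real (n - m) * (\<Sum>i<m. G1 c i i) * pc c"
  proof -
    have "(\<Sum>i\<in>?S2. \<Sum>j<m. Tv c i j) = (\<Sum>i\<in>?S2. \<Sum>j<m. G1 c j j * pc c)"
      unfolding Tv_def by (intro sum.cong refl) auto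
    then show ?thesis using c2 by (simp add: sum_distrib_right sum_distrib_left[symmetric] mult_ac)
  qed
  have b22: "(\<Sum>i\<in>?S2. \<Sum>j\<in>?S2. Tv c i j) = real (n - m) * qc c + real (n - m) * (real (n - m) - 1) * (pc c)^2"
  proof -
    have "(\<Sum>i\<in>?S2. \<Sum>j\<in>?S2. Tv c i j) = (\<Sum>i\<in>?S2. \<Sum>j\<in>?S2. if i = j then qc c else pc c * pc c)"
      unfolding Tv_def by (intro sum.cong refl) auto
    also have "\<dots> = (\<Sum>i\<in>?S2. (\<Sum>j\<in>?S2. pc c * pc c) + (qc c - pc c * pc c))"
      by (intro sum.cong refl sum_if_eq) auto
    also have "\<dots> = real (n - m) * qc c + real (n - m) * (real (n - m) - 1) * (pc c)^2"
      using c2 mn by (simp add: power2_eq_square algebra_simps of_nat_diff)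
    finally show ?thesis .
  qed
  have "(\<Sum>i<n. \<Sum>j<n. Tv c i j) = (\<Sum>i<m. \<Sum>j<m. Tv c i j) + (\<Sum>i<m. \<Sum>j\<in>?S2. Tv c i j)
      + ((\<Sum>i\<in>?S2. \<Sum>j<m. Tv c i j) + (\<Sum>i\<in>?S2. \<Sum>j\<in>?S2. Tv c i j))"
  proof -
    have "(\<Sum>i<n. \<Sum>j<n. Tv c i j) = (\<Sum>i<n. (\<Sum>j<m. Tv c i j) + (\<Sum>j\<in>?S2. Tv c i j))"
      by (intro sum.cong refl split_n)
    also have "\<dots> = (\<Sum>i<n. \<Sum>j<m. Tv c i j) + (\<Sum>i<n. \<Sum>j\<in>?S2. Tv c i j)"
      by (rule sum.distrib)
    also have "\<dots> = ((\<Sum>i<m. \<Sum>j<m. Tv c i j) + (\<Sum>i\<in>?S2. \<Sum>j<m. Tv c i j))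
       + ((\<Sum>i<m. \<Sum>j\<in>?S2. Tv c i j) + (\<Sum>i\<in>?S2. \<Sum>j\<in>?S2. Tv c i j))"
      by (simp only: split_n[of "\<lambda>i. \<Sum>j<m. Tv c i j"] split_n[of "\<lambda>i. \<Sum>j\<in>?S2. Tv c i j"])
    finally show ?thesis by simp
  qed
  then show ?thesis using b11 b12 b21 b22 by simp
qed

definition Sx :: "(nat \<Rightarrow> 'a) \<Rightarrow> real" where
  "Sx x = (\<Sum>c<m. (\<Sum>i<n. g c (x i))^2)"

definition Ax :: "(nat \<Rightarrow> 'a) \<Rightarrow> nat \<Rightarrow> nat \<Rightarrow> real" where
  "Ax x i a = u a (x i)"

lemma F0_expand:
  "Sx x * PP m (Ax x) id * RR m (Ax x) id =
   (\<Sum>c<m. \<Sum>i<n. \<Sum>j<n. \<Sum>\<sigma>\<in>{\<sigma>. \<sigma> permutes {..<m}}. of_int (sign \<sigma>) * Vf \<sigma> c i j x)"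
proof -
  have s: "Sx x = (\<Sum>c<m. \<Sum>i<n. \<Sum>j<n. g c (x i) * g c (x j))"
    unfolding Sx_def power2_eq_square sum_product by simp
  have p: "PP m (Ax x) id * RR m (Ax x) id = (\<Sum>\<sigma>\<in>{\<sigma>. \<sigma> permutes {..<m}}. of_int (sign \<sigma>) *
      (\<Prod>a<m. u a (x a) * u (\<sigma> a) (x a)))"
    unfolding PP_def RR_def lsum_def Ax_def by (simp add: sum_distrib_left prod.distrib mult_ac)
  have "Sx x * PP m (Ax x) id * RR m (Ax x) id = Sx x * (PP m (Ax x) id * RR m (Ax x) id)"
    by (simp add: mult.assoc)
  also have "\<dots> = (\<Sum>c<m. \<Sum>i<n. \<Sum>j<n. g c (x i) * g c (x j)) * (\<Sum>\<sigma>\<in>{\<sigma>. \<sigma> permutes {..<m}}. of_int (sign \<sigma>) *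
      (\<Prod>a<m. u a (x a) * u (\<sigma> a) (x a)))"
    by (simp only: s p)
  also have "\<dots> = (\<Sum>c<m. \<Sum>i<n. \<Sum>j<n. \<Sum>\<sigma>\<in>{\<sigma>. \<sigma> permutes {..<m}}. of_int (sign \<sigma>) * Vf \<sigma> c i j x)"
  proof -
    have "(\<Sum>c<m. \<Sum>i<n. \<Sum>j<n. g c (x i) * g c (x j)) * (\<Sum>\<sigma>\<in>{\<sigma>. \<sigma> permutes {..<m}}. of_int (sign \<sigma>) *
      (\<Prod>a<m. u a (x a) * u (\<sigma> a) (x a))) = (\<Sum>c<m. \<Sum>i<n. \<Sum>j<n. g c (x i) * g c (x j) * (\<Sum>\<sigma>\<in>{\<sigma>. \<sigma> permutes {..<m}}. of_int (sign \<sigma>) *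
      (\<Prod>a<m. u a (x a) * u (\<sigma> a) (x a))))"
      by (simp only: sum_distrib_right)
    also have "\<dots> = (\<Sum>c<m. \<Sum>i<n. \<Sum>j<n. \<Sum>\<sigma>\<in>{\<sigma>. \<sigma> permutes {..<m}}. of_int (sign \<sigma>) * Vf \<sigma> c i j x)"
      unfolding Vf_def sum_distrib_left by (intro sum.cong refl) (simp add: mult_ac)
    finally show ?thesis .
  qed
  finally show ?thesis .
qed

lemma comp_meas: "k < n \<Longrightarrow> h \<in> borel_measurable N \<Longrightarrow> (\<lambda>x. h (x k)) \<in> borel_measurable PN"
  by (rule measurable_compose[OF measurable_component_singleton]) auto

lemma Vf_meas[measurable]: "i < n \<Longrightarrow> j < n \<Longrightarrow> Vf \<sigma> c i j \<in> borel_measurable PN"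
proof -
  assume "i < n" "j < n"
  then have "Vf \<sigma> c i j = (\<lambda>x. \<Prod>k<n. hh \<sigma> c i j k (x k))" using Vf_prod by (intro ext) auto
  moreover have "(\<lambda>x. \<Prod>k<n. hh \<sigma> c i j k (x k)) \<in> borel_measurable PN"
    by (intro borel_measurable_prod comp_meas) auto
  ultimately show ?thesis by simp
qed

lemma int_sum1:
  fixes f :: "'b \<Rightarrow> (nat \<Rightarrow> 'a) \<Rightarrow> real"
  assumes "\<And>c. c \<in> A \<Longrightarrow> integrable PN (f c)"
  shows "(\<integral>x. (\<Sum>c\<in>A. f c x) \<partial>PN) = (\<Sum>c\<in>A. \<integral>x. f c x \<partial>PN)"
  by (rule Bochner_Integration.integral_sum) (use assms in auto)

lemma int_sum4:
  fixes f :: "nat \<Rightarrow> nat \<Rightarrow> nat \<Rightarrow> (nat \<Rightarrow> nat) \<Rightarrow> (nat \<Rightarrow> 'a) \<Rightarrow> real"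
  assumes I: "\<And>c i j \<sigma>. c < m \<Longrightarrow> i < n \<Longrightarrow> j < n \<Longrightarrow> \<sigma> \<in> P \<Longrightarrow> integrable PN (f c i j \<sigma>)"
  shows "integrable PN (\<lambda>x. \<Sum>c<m. \<Sum>i<n. \<Sum>j<n. \<Sum>\<sigma>\<in>P. f c i j \<sigma> x)"
    and "(\<integral>x. (\<Sum>c<m. \<Sum>i<n. \<Sum>j<n. \<Sum>\<sigma>\<in>P. f c i j \<sigma> x) \<partial>PN) =
     (\<Sum>c<m. \<Sum>i<n. \<Sum>j<n. \<Sum>\<sigma>\<in>P. \<integral>x. f c i j \<sigma> x \<partial>PN)"
proof -
  have i3: "integrable PN (\<lambda>x. \<Sum>\<sigma>\<in>P. f c i j \<sigma> x)" if "c < m" "i < n" "j < n" for c i j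
    using that I by (intro Bochner_Integration.integrable_sum) auto
  have i2: "integrable PN (\<lambda>x. \<Sum>j<n. \<Sum>\<sigma>\<in>P. f c i j \<sigma> x)" if "c < m" "i < n" for c i
    by (rule Bochner_Integration.integrable_sum) (use that i3 in auto)
  have i1: "integrable PN (\<lambda>x. \<Sum>i<n. \<Sum>j<n. \<Sum>\<sigma>\<in>P. f c i j \<sigma> x)" if "c < m" for c
    by (rule Bochner_Integration.integrable_sum) (use that i2 in auto)
  show "integrable PN (\<lambda>x. \<Sum>c<m. \<Sum>i<n. \<Sum>j<n. \<Sum>\<sigma>\<in>P. f c i j \<sigma> x)"
    by (rule Bochner_Integration.integrable_sum) (use i1 in auto)
  show "(\<integral>x. (\<Sum>c<m. \<Sum>i<n. \<Sum>j<n. \<Sum>\<sigma>\<in>P. f c i j \<sigma> x) \<partial>PN) =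
     (\<Sum>c<m. \<Sum>i<n. \<Sum>j<n. \<Sum>\<sigma>\<in>P. \<integral>x. f c i j \<sigma> x \<partial>PN)"
    using i1 i2 i3 I by (simp add: int_sum1)
qed

lemma F0_int: "integrable PN (\<lambda>x. Sx x * PP m (Ax x) id * RR m (Ax x) id)"
  unfolding F0_expand
  by (rule int_sum4(1)) (auto intro: Vf_int)

lemma F0_integral: "(\<integral>x. Sx x * PP m (Ax x) id * RR m (Ax x) id \<partial>PN) = (\<Sum>c<m. \<Sum>i<n. \<Sum>j<n. Tv c i j)"
proof -
  have "(\<integral>x. Sx x * PP m (Ax x) id * RR m (Ax x) id \<partial>PN) =
     (\<Sum>c<m. \<Sum>i<n. \<Sum>j<n. \<Sum>\<sigma>\<in>{\<sigma>. \<sigma> permutes {..<m}}. \<integral>x. of_int (sign \<sigma>) * Vf \<sigma> c i j x \<partial>PN)"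
    unfolding F0_expand
    by (rule int_sum4(2)) (auto intro: Vf_int)
  also have "\<dots> = (\<Sum>c<m. \<Sum>i<n. \<Sum>j<n. Tv c i j)"
    by (intro sum.cong refl) (simp add: sum_Vf T_val)
  finally show ?thesis .
qed

lemma F0_meas: "(\<lambda>x. Sx x * PP m (Ax x) id * RR m (Ax x) id) \<in> borel_measurable PN"
  using F0_int by (rule borel_measurable_integrable)

lemma Finj:
  assumes \<iota>: "\<iota> \<in> PiE {..<m} (\<lambda>_. {..<n})" "inj_on \<iota> {..<m}"
  shows "integrable PN (\<lambda>x. Sx x * PP m (Ax x) \<iota> * RR m (Ax x) \<iota>)"
    and "(\<integral>x. Sx x * PP m (Ax x) \<iota> * RR m (Ax x) \<iota> \<partial>PN) = (\<integral>x. Sx x * PP m (Ax x) id * RR m (Ax x) id \<partial>PN)"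
proof -
  have im: "\<iota> ` {..<m} \<subseteq> {..<n}" using \<iota>(1) by (auto simp: PiE_def Pi_def)
  obtain \<pi> where \<pi>: "\<pi> permutes {..<n}" "\<And>a. a < m \<Longrightarrow> \<pi> a = \<iota> a"
    using perm_extend[OF \<iota>(2) im mn] by blast
  have \<pi>n: "\<And>k. k < n \<Longrightarrow> \<pi> k < n" using \<pi>(1) perm_lt by blast
  let ?T = "\<lambda>\<omega>. \<lambda>k\<in>{..<n}. \<omega> (\<pi> k)"
  let ?H = "\<lambda>x. Sx x * PP m (Ax x) id * RR m (Ax x) id"
  have inj\<pi>: "inj_on \<pi> {..<n}" using \<pi>(1) by (meson permutes_inj_on)
  have D: "distr PN PN ?T = PN"
    using distr_PiM_reindex[of "{..<n}" "\<lambda>_. N" \<pi> "{..<n}"] prob inj\<pi> \<pi>n by auto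
  have Tm: "?T \<in> measurable PN PN"
  proof (rule measurable_restrict)
    fix k assume "k \<in> {..<n}"
    then show "(\<lambda>\<omega>. \<omega> (\<pi> k)) \<in> measurable PN N"
      using \<pi>n by (intro measurable_component_singleton) auto
  qed
  have HT: "?H (?T x) = Sx x * PP m (Ax x) \<iota> * RR m (Ax x) \<iota>" for x
  proof -
    have "Sx (?T x) = Sx x"
    proof -
      have "(\<Sum>i<n. g c (?T x i)) = (\<Sum>i<n. g c (x i))" for c
      proof -
        have "(\<Sum>i<n. g c (?T x i)) = (\<Sum>i<n. g c (x (\<pi> i)))" by simp
        also have "\<dots> = (\<Sum>i<n. g c (x i))"
          using sum.reindex_bij_betw[OF permutes_imp_bij[OF \<pi>(1)], of "\<lambda>i. g c (x i)"] by simp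
        finally show ?thesis .
      qed
      then show ?thesis unfolding Sx_def by simp
    qed
    moreover have "PP m (Ax (?T x)) id = PP m (Ax x) \<iota>"
      unfolding PP_def Ax_def using mn \<pi>(2) by (intro prod.cong refl) auto
    moreover have "RR m (Ax (?T x)) id = RR m (Ax x) \<iota>"
      unfolding RR_def lsum_def Ax_def using mn \<pi>(2) by (intro sum.cong prod.cong refl arg_cong2[where f="(*)"]) auto
    ultimately show ?thesis by simp
  qed
  have "integrable (distr PN PN ?T) ?H" using F0_int D by simp
  then have "integrable PN (\<lambda>x. ?H (?T x))" using Tm F0_meas by (simp add: integrable_distr_eq)
  then show "integrable PN (\<lambda>x. Sx x * PP m (Ax x) \<iota> * RR m (Ax x) \<iota>)" using HT by simp
  have "(\<integral>x. ?H x \<partial>PN) = (\<integral>x. ?H x \<partial>distr PN PN ?T)" using D by simp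
  also have "\<dots> = (\<integral>x. ?H (?T x) \<partial>PN)" using Tm F0_meas by (rule integral_distr)
  finally show "(\<integral>x. Sx x * PP m (Ax x) \<iota> * RR m (Ax x) \<iota> \<partial>PN) = (\<integral>x. ?H x \<partial>PN)" using HT by simp
qed

definition Dx :: "(nat \<Rightarrow> 'a) \<Rightarrow> real" where
  "Dx x = det (transpose_mat (mat n m (\<lambda>(i,a). Ax x i a)) * mat n m (\<lambda>(i,a). Ax x i a))"

definition W :: real where "W = (\<Sum>c<m. \<Sum>i<n. \<Sum>j<n. Tv c i j)"

lemma Dx_nonneg: "0 \<le> Dx x"
  unfolding Dx_def by (rule gram_nonneg)

lemma Dx_inj: "Dx x = (\<Sum>\<iota>\<in>{\<iota>\<in>PiE {..<m} (\<lambda>_. {..<n}). inj_on \<iota> {..<m}}. PP m (Ax x) \<iota> * RR m (Ax x) \<iota>)"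
proof -
  have "Dx x = (\<Sum>\<iota>\<in>PiE {..<m} (\<lambda>_. {..<n}). PP m (Ax x) \<iota> * RR m (Ax x) \<iota>)"
    unfolding Dx_def by (rule gram_expand)
  also have "\<dots> = (\<Sum>\<iota>\<in>{\<iota>\<in>PiE {..<m} (\<lambda>_. {..<n}). inj_on \<iota> {..<m}}. PP m (Ax x) \<iota> * RR m (Ax x) \<iota>)"
    by (rule sum.mono_neutral_right) (auto simp: RR_noninj finite_PiE)
  finally show ?thesis .
qed

lemma total:
  shows "integrable PN (\<lambda>x. Sx x * Dx x)"
    and "(\<integral>x. Sx x * Dx x \<partial>PN) = fact n / fact (n - m) * W"
proof -
  let ?I = "{\<iota>\<in>PiE {..<m} (\<lambda>_. {..<n}). inj_on \<iota> {..<m}}"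
  have e: "Sx x * Dx x = (\<Sum>\<iota>\<in>?I. Sx x * PP m (Ax x) \<iota> * RR m (Ax x) \<iota>)" for x
    unfolding Dx_inj by (simp add: sum_distrib_left mult_ac)
  show "integrable PN (\<lambda>x. Sx x * Dx x)"
    unfolding e by (rule Bochner_Integration.integrable_sum) (use Finj(1) in auto)
  have "(\<integral>x. Sx x * Dx x \<partial>PN) = (\<Sum>\<iota>\<in>?I. \<integral>x. Sx x * PP m (Ax x) \<iota> * RR m (Ax x) \<iota> \<partial>PN)"
    unfolding e by (rule Bochner_Integration.integral_sum) (use Finj(1) in auto)
  also have "\<dots> = (\<Sum>\<iota>\<in>?I. W)"
    using Finj(2) F0_integral unfolding W_def by (intro sum.cong refl) auto
  also have "\<dots> = fact n / fact (n - m) * W"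
    using card_inj_PiE_real[OF mn] by simp
  finally show "(\<integral>x. Sx x * Dx x \<partial>PN) = fact n / fact (n - m) * W" .
qed

definition good :: "'a \<Rightarrow> bool" where
  "good z \<longleftrightarrow> K z \<le> B \<and> (\<forall>a<m. \<bar>u a z\<bar> \<le> sqrt B)"

lemma AE_good: "AE z in N. good z"
  using Kbound abs_u unfolding good_def K_def by eventually_elim auto

lemma K_nonneg: "0 \<le> K z" unfolding K_def by (intro sum_nonneg) auto

lemma int_good:
  assumes "f \<in> borel_measurable N" and "\<And>z. good z \<Longrightarrow> \<bar>f z\<bar> \<le> C * (1 + (y z)^2)"
  shows "integrable N f"
proof (rule int_dom[where C=C, OF assms(1)])
  show "AE z in N. \<bar>f z\<bar> \<le> C * (1 + (y z)^2)"
    using AE_good by (rule eventually_mono) (rule assms(2))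
qed

lemma sB: "0 \<le> sqrt B" "sqrt B * sqrt B = B" "0 \<le> B" using B1 by auto

lemma y_le: "\<bar>y z\<bar> \<le> 1 + (y z)^2" "(y z)^2 \<le> 1 + (y z)^2" "0 \<le> (y z)^2"
  using abs_le_1_sq by auto

lemma good_u: "good z \<Longrightarrow> a < m \<Longrightarrow> \<bar>u a z\<bar> \<le> sqrt B" unfolding good_def by auto
lemma good_K: "good z \<Longrightarrow> \<bar>K z\<bar> \<le> B" unfolding good_def using K_nonneg by auto

lemma good_uu: "good z \<Longrightarrow> a < m \<Longrightarrow> b < m \<Longrightarrow> \<bar>u a z * u b z\<bar> \<le> B"
proof -
  assume "good z" "a < m" "b < m"
  then have "\<bar>u a z * u b z\<bar> \<le> sqrt B * sqrt B" unfolding abs_mult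
    by (intro mult_mono good_u) (auto simp: sB)
  then show ?thesis using sB by simp
qed

lemma good_g: "good z \<Longrightarrow> c < m \<Longrightarrow> \<bar>g c z\<bar> \<le> sqrt B * (1 + (y z)^2)"
proof -
  assume "good z" "c < m"
  then show ?thesis unfolding g_def abs_mult
    by (intro mult_mono good_u y_le) (auto simp: sB)
qed

lemma good_gg: "good z \<Longrightarrow> c < m \<Longrightarrow> d < m \<Longrightarrow> \<bar>g c z * g d z\<bar> \<le> B * (1 + (y z)^2)"
proof -
  assume "good z" "c < m" "d < m"
  then have "\<bar>g c z * g d z\<bar> = \<bar>u c z * u d z\<bar> * (y z)^2" unfolding g_def
    by (simp add: abs_mult power2_eq_square mult_ac)
  also have "\<dots> \<le> B * (1 + (y z)^2)" using \<open>good z\<close> \<open>c < m\<close> \<open>d < m\<close>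
    by (intro mult_mono good_uu y_le) (auto simp: sB)
  finally show ?thesis .
qed

lemma int_uu: "a < m \<Longrightarrow> b < m \<Longrightarrow> integrable N (\<lambda>z. u a z * u b z)"
proof (rule int_good[where C=B])
  fix z assume "good z" "a < m" "b < m"
  then have "\<bar>u a z * u b z\<bar> \<le> B" by (rule good_uu)
  also have "B \<le> B * (1 + (y z)^2)" using sB by (simp add: algebra_simps)
  finally show "\<bar>u a z * u b z\<bar> \<le> B * (1 + (y z)^2)" .
qed simp

lemma int_g: "c < m \<Longrightarrow> integrable N (g c)"
  by (rule int_good[where C="sqrt B"]) (auto intro: good_g)

lemma int_uug: "a < m \<Longrightarrow> b < m \<Longrightarrow> c < m \<Longrightarrow> integrable N (\<lambda>z. u a z * u b z * g c z)"
proof (rule int_good[where C="B * sqrt B"])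
  fix z assume "good z" "a < m" "b < m" "c < m"
  then show "\<bar>u a z * u b z * g c z\<bar> \<le> B * sqrt B * (1 + (y z)^2)"
    unfolding abs_mult[of "u a z * u b z"] mult.assoc[of B]
    by (intro mult_mono good_uu good_g) (auto simp: sB)
qed simp

lemma int_uugg: "a < m \<Longrightarrow> b < m \<Longrightarrow> c < m \<Longrightarrow> d < m \<Longrightarrow> integrable N (\<lambda>z. u a z * u b z * (g c z * g d z))"
proof (rule int_good[where C="B * B"])
  fix z assume "good z" "a < m" "b < m" "c < m" "d < m"
  then show "\<bar>u a z * u b z * (g c z * g d z)\<bar> \<le> B * B * (1 + (y z)^2)"
    unfolding abs_mult[of "u a z * u b z"] mult.assoc[of B]
    by (intro mult_mono good_uu good_gg) (auto simp: sB)
qed simp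

lemma int_Kg: "c < m \<Longrightarrow> integrable N (\<lambda>z. K z * g c z)"
proof (rule int_good[where C="B * sqrt B"])
  fix z assume "good z" "c < m"
  then show "\<bar>K z * g c z\<bar> \<le> B * sqrt B * (1 + (y z)^2)"
    unfolding abs_mult mult.assoc[of B]
    by (intro mult_mono good_K good_g) (auto simp: sB)
qed simp

lemma int_Ky: "integrable N (\<lambda>z. K z * (y z)^2)"
proof (rule int_good[where C="B"])
  fix z assume "good z"
  then show "\<bar>K z * (y z)^2\<bar> \<le> B * (1 + (y z)^2)"
    unfolding abs_mult by (intro mult_mono good_K y_le) (auto simp: sB)
qed simp

lemma int_KKy: "integrable N (\<lambda>z. K z * K z * (y z)^2)"
proof (rule int_good[where C="B * B"])
  fix z assume "good z"
  then show "\<bar>K z * K z * (y z)^2\<bar> \<le> B * B * (1 + (y z)^2)"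
    unfolding abs_mult by (intro mult_mono good_K y_le) (auto simp: sB)
qed simp

definition ac :: "nat \<Rightarrow> real" where "ac c = (\<integral>z. K z * g c z \<partial>N)"

lemma sum_G1: "c < m \<Longrightarrow> (\<Sum>i<m. G1 c i i) = ac c"
proof -
  assume c: "c < m"
  have "(\<Sum>i<m. G1 c i i) = (\<integral>z. (\<Sum>i<m. u i z * u i z * g c z) \<partial>N)"
    unfolding G1_def by (rule Bochner_Integration.integral_sum[symmetric]) (use c int_uug in auto)
  also have "\<dots> = ac c" unfolding ac_def K_def
    by (simp add: sum_distrib_right power2_eq_square)
  finally show ?thesis .
qed

lemma sum_qc: "(\<Sum>c<m. qc c) = (\<integral>z. K z * (y z)^2 \<partial>N)"
proof -
  have "(\<Sum>c<m. qc c) = (\<integral>z. (\<Sum>c<m. g c z * g c z) \<partial>N)"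
    unfolding qc_def
    by (rule Bochner_Integration.integral_sum[symmetric])
       (use int_uugg[of _ _ _ _] in \<open>auto intro!: int_good[where C=B] good_gg\<close>)
  also have "\<dots> = (\<integral>z. K z * (y z)^2 \<partial>N)" unfolding K_def g_def
    by (simp add: sum_distrib_right sum_distrib_left power2_eq_square mult_ac)
  finally show ?thesis .
qed

lemma sum_G2: "(\<Sum>c<m. \<Sum>i<m. G2 c i) = (\<integral>z. K z * K z * (y z)^2 \<partial>N)"
proof -
  have "(\<Sum>c<m. \<Sum>i<m. G2 c i) = (\<Sum>c<m. \<integral>z. (\<Sum>i<m. u i z * u i z * (g c z * g c z)) \<partial>N)"
    unfolding G2_def
    by (intro sum.cong refl Bochner_Integration.integral_sum[symmetric]) (use int_uugg in auto)
  also have "\<dots> = (\<integral>z. (\<Sum>c<m. \<Sum>i<m. u i z * u i z * (g c z * g c z)) \<partial>N)"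
    by (rule Bochner_Integration.integral_sum[symmetric])
       (auto intro!: Bochner_Integration.integrable_sum int_uugg)
  also have "\<dots> = (\<integral>z. K z * K z * (y z)^2 \<partial>N)" unfolding K_def g_def
    by (simp add: sum_distrib_right sum_distrib_left power2_eq_square mult_ac)
  finally show ?thesis .
qed

definition Z :: real where "Z = (\<Sum>c<m. \<Sum>i<m. \<Sum>j<m. (G1 c i j)^2)"
definition KK2 :: real where "KK2 = (\<integral>z. K z * K z * (y z)^2 \<partial>N)"
definition KY :: real where "KY = (\<integral>z. K z * (y z)^2 \<partial>N)"
definition Y2 :: real where "Y2 = (\<integral>z. (y z)^2 \<partial>N)"

lemma W_formula:
  "W = KK2 + real (n - m) * KY + (\<Sum>c<m. (ac c)^2) - Z + 2 * real (n - m) * (\<Sum>c<m. ac c * pc c)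
       + real (n - m) * (real (n - m) - 1) * (\<Sum>c<m. (pc c)^2)"
proof -
  have "W = (\<Sum>c<m. (\<Sum>i<m. G2 c i) + real (n - m) * qc c + (ac c)^2 - (\<Sum>i<m. \<Sum>j<m. (G1 c i j)^2)
     + 2 * real (n - m) * ac c * pc c + real (n - m) * (real (n - m) - 1) * (pc c)^2)"
    unfolding W_def by (intro sum.cong refl) (simp add: Tsum_c sum_G1)
  also have "\<dots> = (\<Sum>c<m. \<Sum>i<m. G2 c i) + real (n - m) * (\<Sum>c<m. qc c) + (\<Sum>c<m. (ac c)^2) - Z
     + 2 * real (n - m) * (\<Sum>c<m. ac c * pc c) + real (n - m) * (real (n - m) - 1) * (\<Sum>c<m. (pc c)^2)"
    unfolding Z_def by (simp add: sum.distrib sum_subtractf sum_distrib_left mult_ac)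
  finally show ?thesis unfolding KK2_def KY_def sum_G2 sum_qc .
qed

lemma Z_nonneg: "0 \<le> Z" unfolding Z_def by (intro sum_nonneg) auto

lemma int_hu: "c < m \<Longrightarrow> (\<integral>z. y z * K z * u c z \<partial>N) = ac c"
  unfolding ac_def g_def by (simp add: mult_ac)

lemma bessel: "(\<Sum>c<m. (ac c)^2) \<le> KK2"
proof -
  define r where "r z = y z * K z - (\<Sum>c<m. ac c * u c z)" for z
  have e: "(r z)^2 = K z * K z * (y z)^2 - 2 * (\<Sum>c<m. ac c * (K z * g c z))
        + (\<Sum>c<m. \<Sum>d<m. ac c * ac d * (u c z * u d z))" for z
  proof -
    have "(\<Sum>c<m. ac c * (K z * g c z)) = y z * K z * (\<Sum>c<m. ac c * u c z)"
      unfolding g_def sum_distrib_left by (intro sum.cong refl) (simp add: mult_ac)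
    moreover have "(\<Sum>c<m. \<Sum>d<m. ac c * ac d * (u c z * u d z)) = (\<Sum>c<m. ac c * u c z)^2"
      unfolding power2_eq_square sum_product by (intro sum.cong refl) (simp add: mult_ac)
    ultimately show ?thesis unfolding r_def by (simp add: power2_eq_square algebra_simps)
  qed
  have i1: "integrable N (\<lambda>z. \<Sum>c<m. ac c * (K z * g c z))"
    by (intro Bochner_Integration.integrable_sum integrable_mult_right int_Kg) auto
  have i2: "integrable N (\<lambda>z. \<Sum>c<m. \<Sum>d<m. ac c * ac d * (u c z * u d z))"
    by (intro Bochner_Integration.integrable_sum integrable_mult_right int_uu) auto
  have "(\<integral>z. (r z)^2 \<partial>N) = KK2 - 2 * (\<Sum>c<m. ac c * ac c) + (\<Sum>c<m. \<Sum>d<m. ac c * ac d * (if c = d then 1 else 0))"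
  proof -
    have "(\<integral>z. (r z)^2 \<partial>N) = (\<integral>z. K z * K z * (y z)^2 \<partial>N) - (\<integral>z. 2 * (\<Sum>c<m. ac c * (K z * g c z)) \<partial>N)
        + (\<integral>z. (\<Sum>c<m. \<Sum>d<m. ac c * ac d * (u c z * u d z)) \<partial>N)"
      unfolding e using int_KKy i1 i2 by simp
    also have "(\<integral>z. 2 * (\<Sum>c<m. ac c * (K z * g c z)) \<partial>N) = 2 * (\<Sum>c<m. ac c * ac c)"
      using int_Kg by (simp add: Bochner_Integration.integral_sum ac_def)
    also have "(\<integral>z. (\<Sum>c<m. \<Sum>d<m. ac c * ac d * (u c z * u d z)) \<partial>N) =
        (\<Sum>c<m. \<Sum>d<m. ac c * ac d * (if c = d then 1 else 0))"
    proof -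
      have "(\<integral>z. (\<Sum>c<m. \<Sum>d<m. ac c * ac d * (u c z * u d z)) \<partial>N) =
         (\<Sum>c<m. \<integral>z. (\<Sum>d<m. ac c * ac d * (u c z * u d z)) \<partial>N)"
        by (rule Bochner_Integration.integral_sum)
           (auto intro!: Bochner_Integration.integrable_sum integrable_mult_right int_uu)
      also have "\<dots> = (\<Sum>c<m. \<Sum>d<m. \<integral>z. ac c * ac d * (u c z * u d z) \<partial>N)"
        by (intro sum.cong refl Bochner_Integration.integral_sum)
           (auto intro!: integrable_mult_right int_uu)
      also have "\<dots> = (\<Sum>c<m. \<Sum>d<m. ac c * ac d * (if c = d then 1 else 0))"
        by (intro sum.cong refl) (simp add: orth)
      finally show ?thesis .
    qed
    finally show ?thesis unfolding KK2_def .
  qed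
  also have "\<dots> = KK2 - (\<Sum>c<m. (ac c)^2)"
    by (simp add: power2_eq_square if_distrib sum.delta cong: if_cong)
  finally have "(\<integral>z. (r z)^2 \<partial>N) = KK2 - (\<Sum>c<m. (ac c)^2)" .
  moreover have "0 \<le> (\<integral>z. (r z)^2 \<partial>N)" by (intro integral_nonneg_AE) auto
  ultimately show ?thesis by simp
qed

lemma y2_int: "integrable N (\<lambda>z. (y z)^2)" by (rule y2)

lemma KK2_le: "KK2 \<le> B * B * Y2"
proof -
  have "KK2 \<le> (\<integral>z. B * B * (y z)^2 \<partial>N)"
    unfolding KK2_def
  proof (rule integral_mono_AE[OF int_KKy])
    show "integrable N (\<lambda>z. B * B * (y z)^2)" using y2 by simp
    show "AE z in N. K z * K z * (y z)^2 \<le> B * B * (y z)^2"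
      using AE_good
    proof (rule eventually_mono)
      fix z assume "good z"
      then have "0 \<le> K z" "K z \<le> B" using K_nonneg good_def by auto
      then have "K z * K z \<le> B * B" by (intro mult_mono) auto
      then show "K z * K z * (y z)^2 \<le> B * B * (y z)^2" by (intro mult_right_mono) auto
    qed
  qed
  then show ?thesis unfolding Y2_def by simp
qed

lemma KY_le: "KY \<le> B * Y2"
proof -
  have "KY \<le> (\<integral>z. B * (y z)^2 \<partial>N)"
    unfolding KY_def
  proof (rule integral_mono_AE[OF int_Ky])
    show "integrable N (\<lambda>z. B * (y z)^2)" using y2 by simp
    show "AE z in N. K z * (y z)^2 \<le> B * (y z)^2"
      using AE_good
    proof (rule eventually_mono)
      fix z assume "good z"
      then have "K z \<le> B" using good_def by auto
      then show "K z * (y z)^2 \<le> B * (y z)^2" by (intro mult_right_mono) auto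
    qed
  qed
  then show ?thesis unfolding Y2_def by simp
qed

lemma Y2_nonneg: "0 \<le> Y2" unfolding Y2_def by (intro integral_nonneg_AE) auto

lemma W_base: "W \<le> B * (B + real (n - m)) * Y2 + (\<Sum>c<m. (ac c)^2) + 2 * real (n - m) * (\<Sum>c<m. ac c * pc c)
       + real (n - m) * (real (n - m) - 1) * (\<Sum>c<m. (pc c)^2)"
proof -
  have "real (n - m) * KY \<le> real (n - m) * (B * Y2)" using KY_le by (intro mult_left_mono) auto
  then show ?thesis using W_formula KK2_le Z_nonneg by (simp add: algebra_simps)
qed

lemma P2_nonneg: "0 \<le> (\<Sum>c<m. (pc c)^2)" by (intro sum_nonneg) auto

lemma two_ab: "2 * ((a::real) * b) \<le> a^2 + b^2"
  using power2_diff[of a b] zero_le_power2[of "a - b"] by linarith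

lemma W_bound1:
  assumes m0: "0 < m"
  shows "W \<le> B * (B + real (n - m)) * Y2 + real n * (B * B) * Y2 + (real n)^2 * (\<Sum>c<m. (pc c)^2)"
proof -
  define d where "d = real (n - m)"
  define A where "A = (\<Sum>c<m. (ac c)^2)"
  define P where "P = (\<Sum>c<m. (pc c)^2)"
  define X where "X = (\<Sum>c<m. ac c * pc c)"
  have Wb: "W \<le> B * (B + d) * Y2 + A + 2 * d * X + d * (d - 1) * P"
    using W_base unfolding d_def A_def P_def X_def .
  have A: "A \<le> B * B * Y2" using bessel KK2_le unfolding A_def by simp
  have X: "2 * X \<le> A + P"
  proof -
    have "2 * X = (\<Sum>c<m. 2 * (ac c * pc c))" unfolding X_def by (simp add: sum_distrib_left)
    also have "\<dots> \<le> (\<Sum>c<m. (ac c)^2 + (pc c)^2)"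
      by (intro sum_mono two_ab)
    finally show ?thesis unfolding A_def P_def by (simp add: sum.distrib)
  qed
  have d0: "0 \<le> d" unfolding d_def by simp
  have dn: "1 + d \<le> real n" using m0 mn unfolding d_def by (simp add: of_nat_diff)
  have dn2: "d * d \<le> real n * real n" using mn unfolding d_def by (intro mult_mono) auto
  have P0: "0 \<le> P" unfolding P_def by (rule P2_nonneg)
  have A0: "0 \<le> A" unfolding A_def by (intro sum_nonneg) auto
  have dX: "2 * d * X \<le> d * A + d * P"
  proof -
    have "d * (2 * X) \<le> d * (A + P)" using X d0 by (rule mult_left_mono)
    then show ?thesis by (simp add: algebra_simps)
  qed
  have e1: "(1 + d) * A \<le> real n * (B * B * Y2)"
    using A dn d0 A0 by (intro mult_mono) auto
  have e2: "(d * d) * P \<le> (real n * real n) * P" using dn2 P0 by (rule mult_right_mono)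
  have e3: "d * (d - 1) * P = d * d * P - d * P" by (simp add: algebra_simps)
  have "W \<le> B * (B + d) * Y2 + real n * (B * B * Y2) + (real n * real n) * P"
    using Wb dX e1 e2 e3 by (simp add: algebra_simps)
  then show ?thesis unfolding d_def P_def by (simp add: power2_eq_square mult_ac)
qed

lemma W_bound0:
  assumes Km: "AE z in N. K z = real m"
  shows "W \<le> B * (B + real (n - m)) * Y2 + (real n)^2 * (\<Sum>c<m. (pc c)^2)"
proof -
  define d where "d = real (n - m)"
  define P where "P = (\<Sum>c<m. (pc c)^2)"
  have a: "ac c = real m * pc c" if "c < m" for c
  proof -
    have "ac c = (\<integral>z. real m * g c z \<partial>N)" unfolding ac_def
      by (rule integral_cong_AE) (use Km in auto)
    then show ?thesis unfolding pc_def by simp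
  qed
  have A: "(\<Sum>c<m. (ac c)^2) = real m * real m * P"
    unfolding P_def by (simp add: a sum_distrib_left power2_eq_square mult_ac)
  have X: "(\<Sum>c<m. ac c * pc c) = real m * P"
    unfolding P_def by (simp add: a sum_distrib_left power2_eq_square mult_ac)
  have Wb: "W \<le> B * (B + d) * Y2 + real m * real m * P + 2 * d * (real m * P) + d * (d - 1) * P"
    using W_base unfolding A X d_def P_def .
  have nd: "real n = real m + d" using mn unfolding d_def by (simp add: of_nat_diff)
  have P0: "0 \<le> P" unfolding P_def by (rule P2_nonneg)
  have d0: "0 \<le> d" unfolding d_def by simp
  have "real m * real m * P + 2 * d * (real m * P) + d * (d - 1) * P = (real n * real n) * P - d * P"
    unfolding nd by (simp add: algebra_simps)
  moreover have "0 \<le> d * P" using d0 P0 by simp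
  ultimately have "W \<le> B * (B + d) * Y2 + (real n * real n) * P" using Wb by linarith
  then show ?thesis unfolding d_def P_def by (simp add: power2_eq_square)
qed

lemma W_bound_pos:
  assumes pos: "AE z in N. \<forall>c<m. 0 \<le> g c z"
  shows "W \<le> B * (B + real (n - m)) * Y2 + (B + real (n - m))^2 * (\<Sum>c<m. (pc c)^2)"
proof -
  let ?d = "real (n - m)" and ?P = "\<Sum>c<m. (pc c)^2"
  have pc0: "0 \<le> pc c" if "c < m" for c
    unfolding pc_def by (rule integral_nonneg_AE) (use pos that in auto)
  have ac0: "0 \<le> ac c" if "c < m" for c
    unfolding ac_def by (rule integral_nonneg_AE) (use pos that K_nonneg in auto)
  have acB: "ac c \<le> B * pc c" if c: "c < m" for c
  proof -
    have "ac c \<le> (\<integral>z. B * g c z \<partial>N)" unfolding ac_def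
    proof (rule integral_mono_AE[OF int_Kg[OF c]])
      show "integrable N (\<lambda>z. B * g c z)" using int_g[OF c] by simp
      show "AE z in N. K z * g c z \<le> B * g c z"
        using AE_good pos
      proof (eventually_elim)
        fix z assume "good z" "\<forall>c<m. 0 \<le> g c z"
        then show "K z * g c z \<le> B * g c z" using c good_def by (auto intro: mult_right_mono)
      qed
    qed
    then show ?thesis unfolding pc_def by simp
  qed
  have A: "(\<Sum>c<m. (ac c)^2) \<le> B * B * ?P"
  proof -
    have "(\<Sum>c<m. (ac c)^2) \<le> (\<Sum>c<m. (B * pc c)^2)"
      using ac0 acB by (intro sum_mono power_mono) auto
    then show ?thesis by (simp add: power_mult_distrib sum_distrib_left power2_eq_square mult_ac)
  qed
  have X: "(\<Sum>c<m. ac c * pc c) \<le> B * ?P"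
  proof -
    have "(\<Sum>c<m. ac c * pc c) \<le> (\<Sum>c<m. B * pc c * pc c)"
      using acB pc0 by (intro sum_mono mult_right_mono) auto
    then show ?thesis by (simp add: sum_distrib_left power2_eq_square mult_ac)
  qed
  define d where "d = real (n - m)"
  define P where "P = (\<Sum>c<m. (pc c)^2)"
  have d0: "0 \<le> d" unfolding d_def by simp
  have P0: "0 \<le> P" unfolding P_def by (rule P2_nonneg)
  have Wb: "W \<le> B * (B + d) * Y2 + (\<Sum>c<m. (ac c)^2) + 2 * d * (\<Sum>c<m. ac c * pc c) + d * (d - 1) * P"
    using W_base unfolding d_def P_def .
  have A': "(\<Sum>c<m. (ac c)^2) \<le> B * B * P" using A unfolding P_def .
  have X': "2 * d * (\<Sum>c<m. ac c * pc c) \<le> 2 * d * (B * P)"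
    using X d0 unfolding P_def by (intro mult_left_mono) auto
  have e: "B * B * P + 2 * d * (B * P) + d * (d - 1) * P = (B + d)^2 * P - d * P"
    by (simp add: power2_eq_square algebra_simps)
  have "0 \<le> d * P" using d0 P0 by simp
  then have "W \<le> B * (B + d) * Y2 + (B + d)^2 * P" using Wb A' X' e by linarith
  then show ?thesis unfolding d_def P_def .
qed

lemma Sx_meas[measurable]: "Sx \<in> borel_measurable PN"
  unfolding Sx_def by (intro borel_measurable_sum borel_measurable_power comp_meas) auto

lemma Dx_meas: "Dx \<in> borel_measurable PN"
proof -
  have e: "Dx = (\<lambda>x. \<Sum>\<iota>\<in>PiE {..<m} (\<lambda>_. {..<n}). PP m (Ax x) \<iota> * RR m (Ax x) \<iota>)"
    unfolding Dx_def by (intro ext gram_expand)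
  have "(\<lambda>x. PP m (Ax x) \<iota> * RR m (Ax x) \<iota>) \<in> borel_measurable PN" if \<iota>: "\<iota> \<in> PiE {..<m} (\<lambda>_. {..<n})" for \<iota>
  proof -
    have lt: "\<And>a. a < m \<Longrightarrow> \<iota> a < n" using \<iota> by (auto simp: PiE_def Pi_def)
    have cm: "\<And>a h. a < m \<Longrightarrow> h \<in> borel_measurable N \<Longrightarrow> (\<lambda>x. h (x (\<iota> a))) \<in> borel_measurable PN"
      using comp_meas lt by blast
    have p1: "(\<lambda>x. \<Prod>a<m. u a (x (\<iota> a))) \<in> borel_measurable PN"
      by (rule borel_measurable_prod) (simp add: cm)
    have p2: "(\<lambda>x. \<Prod>a<m. u (\<sigma> a) (x (\<iota> a))) \<in> borel_measurable PN" for \<sigma>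
      by (rule borel_measurable_prod) (simp add: cm)
    have p3: "(\<lambda>x. \<Sum>\<sigma>\<in>{\<sigma>. \<sigma> permutes {..<m}}. of_int (sign \<sigma>) * (\<Prod>a<m. u (\<sigma> a) (x (\<iota> a)))) \<in> borel_measurable PN"
      by (rule borel_measurable_sum) (rule borel_measurable_times[OF borel_measurable_const p2])
    show ?thesis unfolding PP_def RR_def lsum_def Ax_def
      using p1 p3 by (rule borel_measurable_times)
  qed
  then show ?thesis unfolding e by (intro borel_measurable_sum) auto
qed

lemma E_core:
  "(\<integral>\<^sup>+ x. ennreal (Sx x / (real n)^2) \<partial>density PN (\<lambda>x. ennreal (fact (n - m) / fact n * Dx x)))
    = ennreal (W / (real n)^2)"
proof -
  let ?c = "fact (n - m) / fact n :: real"
  have c0: "0 \<le> ?c" by simp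
  note Dx_meas[measurable]
  have m1: "(\<lambda>x. ennreal (?c * Dx x)) \<in> borel_measurable PN" by measurable
  have m2: "(\<lambda>x. ennreal (Sx x / (real n)^2)) \<in> borel_measurable PN" by measurable
  have "(\<integral>\<^sup>+ x. ennreal (Sx x / (real n)^2) \<partial>density PN (\<lambda>x. ennreal (?c * Dx x)))
      = (\<integral>\<^sup>+ x. ennreal (?c * Dx x) * ennreal (Sx x / (real n)^2) \<partial>PN)"
    by (rule nn_integral_density[OF m1 m2])
  also have "\<dots> = (\<integral>\<^sup>+ x. ennreal (?c / (real n)^2 * (Sx x * Dx x)) \<partial>PN)"
  proof (intro nn_integral_cong)
    fix x
    have "0 \<le> ?c * Dx x" using c0 Dx_nonneg by simp
    then have "ennreal (?c * Dx x) * ennreal (Sx x / (real n)^2) = ennreal (?c * Dx x * (Sx x / (real n)^2))"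
      by (rule ennreal_mult'[symmetric])
    also have "?c * Dx x * (Sx x / (real n)^2) = ?c / (real n)^2 * (Sx x * Dx x)"
      by (simp add: field_simps)
    finally show "ennreal (?c * Dx x) * ennreal (Sx x / (real n)^2) = ennreal (?c / (real n)^2 * (Sx x * Dx x))" .
  qed
  also have "\<dots> = ennreal (\<integral>x. ?c / (real n)^2 * (Sx x * Dx x) \<partial>PN)"
  proof (rule nn_integral_eq_integral)
    show "integrable PN (\<lambda>x. ?c / (real n)^2 * (Sx x * Dx x))" using total(1) by simp
    have "0 \<le> Sx x" for x unfolding Sx_def by (intro sum_nonneg) auto
    then show "AE x in PN. 0 \<le> ?c / (real n)^2 * (Sx x * Dx x)" using Dx_nonneg by simp
  qed
  also have "(\<integral>x. ?c / (real n)^2 * (Sx x * Dx x) \<partial>PN) = W / (real n)^2"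
    using total(2) by simp
  finally show ?thesis .
qed

end




lemma ar_key:
  fixes a mm nn :: real assumes "0 < a" "0 < nn"
  shows "mm / nn * (1 / a) * (1 + (1 / a - 1) * (mm / nn)) = (mm / a) * ((mm / a) + (nn - mm)) / nn^2"
  using assms by (simp add: field_simps power2_eq_square)

lemma ar_xi:
  fixes a mm nn :: real assumes "0 < a" "0 < nn"
  shows "mm / nn * (1 / a) * (mm * (1 / a)) = nn * ((mm / a) * (mm / a)) / nn^2"
  using assms by (simp add: field_simps power2_eq_square)

lemma ar_sq:
  fixes a mm nn :: real assumes a: "0 < a" "a \<le> 1" and m: "0 \<le> mm" "mm \<le> nn"
  shows "(mm / a + (nn - mm))^2 \<le> nn^2 * (1 + 2 * (1 / a)^2 * (mm / nn))"
proof -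
  define k where "k = 1 / a"
  have k1: "1 \<le> k" unfolding k_def using a by simp
  have e1: "mm / a + (nn - mm) = nn + mm * (k - 1)" unfolding k_def by (simp add: field_simps)
  have nn0: "0 \<le> nn" using m by simp
  have "(nn + mm * (k - 1))^2 = nn^2 + 2 * nn * mm * (k - 1) + mm * mm * (k - 1)^2"
    by (simp add: power2_eq_square algebra_simps)
  also have "mm * mm * (k - 1)^2 \<le> nn * mm * (k - 1)^2"
    using m by (intro mult_right_mono mult_right_mono) auto
  then have "nn^2 + 2 * nn * mm * (k - 1) + mm * mm * (k - 1)^2 \<le> nn^2 + 2 * nn * mm * (k - 1) + nn * mm * (k - 1)^2"
    by simp
  also have "\<dots> = nn^2 + nn * mm * (k^2 - 1)" by (simp add: power2_eq_square algebra_simps)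
  also have "\<dots> \<le> nn^2 + nn * mm * (2 * k^2)"
  proof -
    have "k^2 - 1 \<le> 2 * k^2" using zero_le_power2[of k] by linarith
    then show ?thesis using nn0 m by (intro add_left_mono mult_left_mono) auto
  qed
  also have "\<dots> = nn^2 * (1 + 2 * k^2 * (mm / nn))"
  proof (cases "nn = 0")
    case True then show ?thesis by simp
  next
    case False then show ?thesis by (simp add: field_simps power2_eq_square)
  qed
  finally show ?thesis unfolding e1 k_def .
qed

theorem mainTheorem19:
  fixes M :: "'a::polish_space measure"
    and n m :: nat and phi :: "nat \<Rightarrow> 'a \<Rightarrow> real"
    and w f :: "'a \<Rightarrow> real" and \<alpha> :: real
  assumes M_prob: "prob_space M" and M_borel: "sets M = sets borel"
    and m_pos: "0 < m" and nm: "m \<le> n"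
    and phi_meas: "\<And>k. k < m \<Longrightarrow> phi k \<in> borel_measurable M"
    and phi_L2: "\<And>k. k < m \<Longrightarrow> integrable M (\<lambda>x. (phi k x)^2)"
    and phi_orth: "\<And>k l. k < m \<Longrightarrow> l < m \<Longrightarrow>
         (\<integral>x. phi k x * phi l x \<partial>M) = (if k = l then 1 else 0)"
    and w_meas: "w \<in> borel_measurable M"
    and w_nonneg: "\<And>x. x \<in> space M \<Longrightarrow> 0 \<le> w x"
    and w_int: "integrable M w" and w_one: "(\<integral>x. w x \<partial>M) = 1"
    and alpha: "0 < \<alpha>" "\<alpha> \<le> 1"
    and w_ge: "AE x in M. \<alpha> * wm m phi x \<le> w x"
    and f_meas: "f \<in> borel_measurable M"
    and f_L2: "integrable M (\<lambda>x. (f x)^2)"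
  defines "\<beta> \<equiv> 1 + (1 / \<alpha> - 1) * (real m / real n)"
    and "\<xi> \<equiv> (if density M (\<lambda>x. ennreal (w x)) = density M (\<lambda>x. ennreal (wm m phi x))
              then 0 else 1 :: real)"
    and "E \<equiv> (\<integral>\<^sup>+ xs. ennreal (sqnorm2 ((1 / real n) \<cdot>\<^sub>v
              (transpose_mat (Phi_w n m phi w xs) *\<^sub>v fw_vec n f w xs))) \<partial>gamma_n M n m phi w)"
  shows "E \<le> ennreal (real m / real n * (1 / \<alpha>) * (\<beta> + \<xi> * real m * (1 / \<alpha>)) * L2sq M f
                    + L2sq M (proj_V M m phi f))
         \<and> ((AE x in M. \<forall>k<m. 0 \<le> phi k x * f x) \<longrightarrow>
         E \<le> ennreal (real m / real n * (1 / \<alpha>) * \<beta> * L2sq M f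
                    + (1 + 2 * (1 / \<alpha>)^2 * (real m / real n)) * L2sq M (proj_V M m phi f)))"
proof -
  interpret M: prob_space M by (rule M_prob)
  define \<nu> where "\<nu> = density M (\<lambda>x. ennreal (w x))"
  define u where "u a z = (if a < m then phi a z / sqrt (w z) else 0)" for a z
  define y where "y z = f z / sqrt (w z)" for z
  define B where "B = real m / \<alpha>"
  have wm_nonneg: "0 \<le> wm m phi x" for x unfolding wm_def by (intro divide_nonneg_nonneg sum_nonneg) auto
  have zero_phi: "AE x in M. w x = 0 \<longrightarrow> (\<forall>k<m. phi k x = 0)"
    using w_ge
  proof (rule eventually_mono)
    fix x assume a: "\<alpha> * wm m phi x \<le> w x"
    show "w x = 0 \<longrightarrow> (\<forall>k<m. phi k x = 0)"
    proof (intro impI allI)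
      fix k assume w0: "w x = 0" and k: "k < m"
      have "wm m phi x \<le> 0" using a w0 alpha by (simp add: mult_le_0_iff)
      then have "wm m phi x = 0" using wm_nonneg[of x] by linarith
      then have "(\<Sum>k<m. (phi k x)^2) = 0" using m_pos unfolding wm_def by simp
      then have "\<forall>k\<in>{..<m}. (phi k x)^2 = 0" by (subst (asm) sum_nonneg_eq_0_iff) auto
      then show "phi k x = 0" using k by simp
    qed
  qed
  have B1: "1 \<le> B"
  proof -
    have "\<alpha> \<le> real m" using alpha m_pos by linarith
    then show ?thesis unfolding B_def using alpha by (simp add: field_simps)
  qed
  have nu_prob: "prob_space \<nu>"
  proof (rule prob_spaceI)
    have "emeasure \<nu> (space \<nu>) = (\<integral>\<^sup>+ x. ennreal (w x) * indicator (space M) x \<partial>M)"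
      unfolding \<nu>_def using w_meas by (simp add: emeasure_density)
    also have "\<dots> = (\<integral>\<^sup>+ x. ennreal (w x) \<partial>M)"
      by (intro nn_integral_cong) simp
    also have "\<dots> = ennreal (\<integral>x. w x \<partial>M)"
      using w_int w_nonneg by (intro nn_integral_eq_integral) auto
    finally show "emeasure \<nu> (space \<nu>) = 1" using w_one by simp
  qed
  have u_meas: "u a \<in> borel_measurable \<nu>" for a
  proof (cases "a < m")
    case True
    note [measurable] = phi_meas[OF True] w_meas
    show ?thesis unfolding \<nu>_def u_def using True by simp
  next
    case False
    then show ?thesis unfolding \<nu>_def u_def by simp
  qed
  have y_meas: "y \<in> borel_measurable \<nu>"
    unfolding \<nu>_def y_def using f_meas w_meas by simp
  have sq: "sqrt t * sqrt t = t" if "0 \<le> t" for t :: real using that by simp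
  have cancel: "t * (p / sqrt t * (q / sqrt t)) = p * q" if "0 < t" for t p q :: real
    using sq[of t] that by (simp add: field_simps)
  have wsp: "AE z in M. 0 \<le> w z" using w_nonneg by (intro AE_I2) auto
  have orth: "(\<integral>z. u a z * u b z \<partial>\<nu>) = (if a = b then 1 else 0)" if ab: "a < m" "b < m" for a b
  proof -
    note [measurable] = phi_meas[OF ab(1)] phi_meas[OF ab(2)] w_meas
    have "(\<integral>z. u a z * u b z \<partial>\<nu>) = (\<integral>z. w z * (u a z * u b z) \<partial>M)"
      unfolding \<nu>_def using ab wsp by (subst integral_density) (auto simp: u_def)
    also have "\<dots> = (\<integral>z. phi a z * phi b z \<partial>M)"
    proof (rule integral_cong_AE)
      show "AE z in M. w z * (u a z * u b z) = phi a z * phi b z"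
        using zero_phi wsp
      proof eventually_elim
        fix z assume z: "w z = 0 \<longrightarrow> (\<forall>k<m. phi k z = 0)" "0 \<le> w z"
        show "w z * (u a z * u b z) = phi a z * phi b z"
        proof (cases "w z = 0")
          case True then show ?thesis using z ab by simp
        next
          case False then have "0 < w z" using z by simp
          then show ?thesis using ab cancel by (simp add: u_def)
        qed
      qed
    qed (use ab in \<open>auto simp: u_def\<close>)
    finally show ?thesis using phi_orth[OF ab] by simp
  qed
  have Kb: "AE z in \<nu>. (\<Sum>a<m. (u a z)^2) \<le> B"
    unfolding \<nu>_def
  proof (subst AE_density)
    show "(\<lambda>x. ennreal (w x)) \<in> borel_measurable M" using w_meas by simp
    show "AE z in M. 0 < ennreal (w z) \<longrightarrow> (\<Sum>a<m. (u a z)^2) \<le> B"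
      using w_ge
    proof (rule eventually_mono, intro impI)
      fix z assume a: "\<alpha> * wm m phi z \<le> w z" and "0 < ennreal (w z)"
      then have wp: "0 < w z" by (simp add: ennreal_less_zero_iff)
      have "(\<Sum>a<m. (u a z)^2) = (\<Sum>a<m. (phi a z)^2) / w z"
        unfolding u_def sum_divide_distrib using wp by (intro sum.cong refl) (simp add: power_divide)
      also have "(\<Sum>a<m. (phi a z)^2) = real m * wm m phi z" using m_pos unfolding wm_def by simp
      also have "real m * wm m phi z / w z \<le> B"
      proof -
        have "real m * (\<alpha> * wm m phi z) \<le> real m * w z" using a by (intro mult_left_mono) auto
        then have "real m * wm m phi z * \<alpha> \<le> real m * w z" by (simp add: mult_ac)
        then show ?thesis unfolding B_def using wp alpha by (simp add: field_simps)
      qed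
      finally show "(\<Sum>a<m. (u a z)^2) \<le> B" .
    qed
  qed
  have wy2: "integrable M (\<lambda>z. w z * (y z)^2)"
  proof -
    note [measurable] = f_meas w_meas
    show ?thesis
    proof (rule Bochner_Integration.integrable_bound[OF f_L2])
      show "(\<lambda>z. w z * (y z)^2) \<in> borel_measurable M" unfolding y_def by measurable
      show "AE z in M. norm (w z * (y z)^2) \<le> norm ((f z)^2)"
        using wsp
      proof (rule eventually_mono)
        fix z assume "0 \<le> w z"
        then show "norm (w z * (y z)^2) \<le> norm ((f z)^2)"
          using cancel[of "w z" "f z" "f z"] by (cases "w z = 0") (auto simp: y_def power2_eq_square)
      qed
    qed
  qed
  have y2: "integrable \<nu> (\<lambda>z. (y z)^2)"
    using wy2 unfolding \<nu>_def using wsp f_meas w_meas by (subst integrable_density) (auto simp: y_def)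
  have Ku: "(\<Sum>a<m. (u a z)^2) = real m * wm m phi z / w z" if wp: "0 < w z" for z
  proof -
    have "(\<Sum>a<m. (u a z)^2) = (\<Sum>a<m. (phi a z)^2) / w z"
      unfolding u_def sum_divide_distrib using wp by (intro sum.cong refl) (simp add: power_divide)
    also have "(\<Sum>a<m. (phi a z)^2) = real m * wm m phi z" using m_pos unfolding wm_def by simp
    finally show ?thesis .
  qed
  interpret C: core \<nu> m n u y B
    by (rule core.intro[OF nu_prob u_meas y_meas orth Kb B1 y2 nm])
  have Phi: "Phi_w n m phi w xs = mat n m (\<lambda>(i,a). C.Ax xs i a)" for xs
    unfolding Phi_w_def C.Ax_def by (rule eq_matI) (auto simp: u_def)
  have G: "gamma_n M n m phi w = density C.PN (\<lambda>x. ennreal (fact (n - m) / fact n * C.Dx x))"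
    unfolding gamma_n_def Phi C.Dx_def \<nu>_def by simp
  have S: "sqnorm2 ((1 / real n) \<cdot>\<^sub>v (transpose_mat (Phi_w n m phi w xs) *\<^sub>v fw_vec n f w xs))
      = C.Sx xs / (real n)^2" for xs
  proof -
    have "sqnorm2 ((1 / real n) \<cdot>\<^sub>v (transpose_mat (Phi_w n m phi w xs) *\<^sub>v fw_vec n f w xs))
       = (\<Sum>k<m. ((1 / real n) * (\<Sum>i<n. C.g k (xs i)))^2)"
      unfolding sqnorm2_def
    proof (intro sum.cong)
      fix k assume "k \<in> {..<m}"
      then show "(((1 / real n) \<cdot>\<^sub>v (transpose_mat (Phi_w n m phi w xs) *\<^sub>v fw_vec n f w xs)) $ k)^2
         = ((1 / real n) * (\<Sum>i<n. C.g k (xs i)))^2"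
        by (simp add: Phi_w_def fw_vec_def scalar_prod_def C.g_def u_def y_def atLeast0LessThan)
    qed (simp add: Phi_w_def)
    also have "\<dots> = C.Sx xs / (real n)^2"
      unfolding C.Sx_def sum_divide_distrib
      by (intro sum.cong refl) (simp add: power_divide)
    finally show ?thesis .
  qed
  have E: "E = ennreal (C.W / (real n)^2)"
    unfolding E_def S G by (rule C.E_core)
  have Y2: "C.Y2 \<le> L2sq M f"
  proof -
    note [measurable] = f_meas w_meas
    have "C.Y2 = (\<integral>z. w z * (y z)^2 \<partial>M)"
      unfolding C.Y2_def unfolding \<nu>_def using wsp by (subst integral_density) (auto simp: y_def)
    also have "\<dots> \<le> (\<integral>z. (f z)^2 \<partial>M)"
    proof (rule integral_mono_AE[OF wy2 f_L2])
      show "AE z in M. w z * (y z)^2 \<le> (f z)^2"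
        using wsp
      proof (rule eventually_mono)
        fix z assume "0 \<le> w z"
        then show "w z * (y z)^2 \<le> (f z)^2"
          using cancel[of "w z" "f z" "f z"] by (cases "w z = 0") (auto simp: y_def power2_eq_square)
      qed
    qed
    finally show ?thesis unfolding L2sq_def .
  qed
  have pcv: "C.pc c = (\<integral>z. f z * phi c z \<partial>M)" if c: "c < m" for c
  proof -
    note [measurable] = phi_meas[OF c] w_meas f_meas
    have "C.pc c = (\<integral>z. w z * (u c z * y z) \<partial>M)"
      unfolding C.pc_def C.g_def unfolding \<nu>_def using wsp c by (subst integral_density) (auto simp: u_def y_def)
    also have "\<dots> = (\<integral>z. f z * phi c z \<partial>M)"
    proof (rule integral_cong_AE)
      show "AE z in M. w z * (u c z * y z) = f z * phi c z"
        using zero_phi wsp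
      proof eventually_elim
        fix z assume z: "w z = 0 \<longrightarrow> (\<forall>k<m. phi k z = 0)" "0 \<le> w z"
        show "w z * (u c z * y z) = f z * phi c z"
        proof (cases "w z = 0")
          case True then show ?thesis using z c by (simp add: u_def y_def)
        next
          case False then have "0 < w z" using z by simp
          then show ?thesis using c cancel[of "w z" "phi c z" "f z"] by (simp add: u_def y_def mult_ac)
        qed
      qed
    qed (use c in \<open>auto simp: u_def y_def\<close>)
    finally show ?thesis .
  qed
  have phiphi: "integrable M (\<lambda>z. phi k z * phi l z)" if "k < m" "l < m" for k l
  proof (rule Bochner_Integration.integrable_bound)
    show "integrable M (\<lambda>z. (phi k z)^2 + (phi l z)^2)" using phi_L2 that by auto
    show "(\<lambda>z. phi k z * phi l z) \<in> borel_measurable M" using phi_meas that by auto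
    show "AE z in M. norm (phi k z * phi l z) \<le> norm ((phi k z)^2 + (phi l z)^2)"
    proof (intro AE_I2)
      fix z
      have "2 * \<bar>phi k z * phi l z\<bar> \<le> (phi k z)^2 + (phi l z)^2"
        using C.two_ab[of "\<bar>phi k z\<bar>" "\<bar>phi l z\<bar>"] by (simp add: abs_mult)
      then show "norm (phi k z * phi l z) \<le> norm ((phi k z)^2 + (phi l z)^2)" by simp
    qed
  qed
  have P2: "(\<Sum>c<m. (C.pc c)^2) = L2sq M (proj_V M m phi f)"
  proof -
    define \<beta> where "\<beta> k = (\<integral>y. f y * phi k y \<partial>M)" for k
    have "L2sq M (proj_V M m phi f) = (\<integral>x. (\<Sum>k<m. \<Sum>l<m. \<beta> k * \<beta> l * (phi k x * phi l x)) \<partial>M)"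
      unfolding L2sq_def proj_V_def \<beta>_def[symmetric] power2_eq_square sum_product
      by (intro Bochner_Integration.integral_cong refl sum.cong) (simp add: mult_ac)
    also have "\<dots> = (\<Sum>k<m. \<integral>x. (\<Sum>l<m. \<beta> k * \<beta> l * (phi k x * phi l x)) \<partial>M)"
      by (rule Bochner_Integration.integral_sum)
         (auto intro!: Bochner_Integration.integrable_sum integrable_mult_right phiphi)
    also have "\<dots> = (\<Sum>k<m. \<Sum>l<m. \<integral>x. \<beta> k * \<beta> l * (phi k x * phi l x) \<partial>M)"
      by (intro sum.cong refl Bochner_Integration.integral_sum)
         (auto intro!: integrable_mult_right phiphi)
    also have "\<dots> = (\<Sum>k<m. \<Sum>l<m. \<beta> k * \<beta> l * (if k = l then 1 else 0))"
      by (intro sum.cong refl) (simp add: phi_orth)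
    also have "\<dots> = (\<Sum>k<m. (\<beta> k)^2)"
      by (simp add: power2_eq_square if_distrib sum.delta cong: if_cong)
    also have "\<dots> = (\<Sum>c<m. (C.pc c)^2)"
      by (intro sum.cong refl) (simp add: pcv \<beta>_def)
    finally show ?thesis by simp
  qed
  have xi0: "AE z in \<nu>. C.K z = real m" if x0: "\<xi> = 0"
  proof -
    have deq: "density M (\<lambda>x. ennreal (w x)) = density M (\<lambda>x. ennreal (wm m phi x))"
      using x0 unfolding \<xi>_def by (auto split: if_splits)
    have wmm: "wm m phi \<in> borel_measurable M" unfolding wm_def using phi_meas by auto
    have "AE x in M. ennreal (w x) = ennreal (wm m phi x)"
      using wmm w_meas by (intro M.density_unique[OF _ _ deq]) auto
    then have ae: "AE x in M. w x = wm m phi x"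
      using wsp by eventually_elim (use wm_nonneg in auto)
    show ?thesis unfolding \<nu>_def
    proof (subst AE_density)
      show "(\<lambda>x. ennreal (w x)) \<in> borel_measurable M" using w_meas by simp
      show "AE z in M. 0 < ennreal (w z) \<longrightarrow> C.K z = real m"
        using ae
      proof (rule eventually_mono, intro impI)
        fix z assume e: "w z = wm m phi z" and "0 < ennreal (w z)"
        then have wp: "0 < w z" by (simp add: ennreal_less_zero_iff)
        show "C.K z = real m" unfolding C.K_def Ku[OF wp] using e wp by simp
      qed
    qed
  qed
  have pos: "AE z in \<nu>. \<forall>c<m. 0 \<le> C.g c z" if pf: "AE x in M. \<forall>k<m. 0 \<le> phi k x * f x"
    unfolding \<nu>_def
  proof (subst AE_density)
    show "(\<lambda>x. ennreal (w x)) \<in> borel_measurable M" using w_meas by simp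
    show "AE z in M. 0 < ennreal (w z) \<longrightarrow> (\<forall>c<m. 0 \<le> C.g c z)"
      using pf
    proof (rule eventually_mono, intro impI allI)
      fix z c assume p: "\<forall>k<m. 0 \<le> phi k z * f z" and "0 < ennreal (w z)" and c: "c < m"
      then have wp: "0 < w z" by (simp add: ennreal_less_zero_iff)
      have "C.g c z = phi c z * f z / w z"
        unfolding C.g_def u_def y_def using c wp sq[of "w z"] by (simp add: field_simps)
      then show "0 \<le> C.g c z" using p c wp by simp
    qed
  qed
  have n0: "0 < real n" using m_pos nm by simp
  define d where "d = real (n - m)"
  have dd: "d = real n - real m" unfolding d_def using nm by (simp add: of_nat_diff)
  define L where "L = L2sq M f"
  define PP where "PP = L2sq M (proj_V M m phi f)"
  have PP0: "0 \<le> PP" unfolding PP_def P2[symmetric] by (intro sum_nonneg) auto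
  have Y0: "0 \<le> C.Y2" by (rule C.Y2_nonneg)
  have YL: "C.Y2 \<le> L" unfolding L_def by (rule Y2)
  have B0: "0 \<le> B" using B1 by simp
  have BBd: "0 \<le> B * (B + d)" unfolding d_def using B0 by simp
  have key: "real m / real n * (1 / \<alpha>) * \<beta> = B * (B + d) / (real n)^2"
    unfolding \<beta>_def B_def dd using ar_key[OF alpha(1) n0] by simp
  have part1: "C.W / (real n)^2 \<le> real m / real n * (1 / \<alpha>) * (\<beta> + \<xi> * real m * (1 / \<alpha>)) * L + PP"
  proof (cases "\<xi> = 0")
    case True
    have "C.W \<le> B * (B + d) * C.Y2 + (real n)^2 * PP"
      using C.W_bound0[OF xi0[OF True]] unfolding d_def PP_def P2 .
    also have "\<dots> \<le> B * (B + d) * L + (real n)^2 * PP"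
      using YL BBd by (intro add_right_mono mult_left_mono) auto
    finally have "C.W / (real n)^2 \<le> (B * (B + d) * L + (real n)^2 * PP) / (real n)^2"
      using n0 by (intro divide_right_mono) auto
    also have "\<dots> = real m / real n * (1 / \<alpha>) * \<beta> * L + PP"
      unfolding key using n0 by (simp add: field_simps)
    finally show ?thesis using True by simp
  next
    case False
    then have x1: "\<xi> = 1" unfolding \<xi>_def by (auto split: if_splits)
    have "C.W \<le> B * (B + d) * C.Y2 + real n * (B * B) * C.Y2 + (real n)^2 * PP"
      using C.W_bound1[OF m_pos] unfolding d_def PP_def P2 .
    also have "\<dots> \<le> B * (B + d) * L + real n * (B * B) * L + (real n)^2 * PP"
    proof -
      have "B * (B + d) * C.Y2 \<le> B * (B + d) * L" using YL BBd by (intro mult_left_mono) auto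
      moreover have "real n * (B * B) * C.Y2 \<le> real n * (B * B) * L" using YL B0 by (intro mult_left_mono) auto
      ultimately show ?thesis by simp
    qed
    finally have "C.W / (real n)^2 \<le> (B * (B + d) * L + real n * (B * B) * L + (real n)^2 * PP) / (real n)^2"
      using n0 by (intro divide_right_mono) auto
    also have "\<dots> = (B * (B + d) / (real n)^2) * L + (real n * (B * B) / (real n)^2) * L + PP"
      using n0 by (simp add: field_simps)
    also have "\<dots> = real m / real n * (1 / \<alpha>) * (\<beta> + \<xi> * real m * (1 / \<alpha>)) * L + PP"
    proof -
      have e1: "real n * (B * B) / (real n)^2 = real m / real n * (1 / \<alpha>) * (real m * (1 / \<alpha>))"
        unfolding B_def using ar_xi[OF alpha(1) n0] by simp
      have e2: "B * (B + d) / (real n)^2 = real m / real n * (1 / \<alpha>) * \<beta>"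
        using key by simp
      show ?thesis unfolding e1 e2 using x1 alpha n0 by (simp add: field_simps)
    qed
    finally show ?thesis .
  qed
  have part2: "C.W / (real n)^2 \<le> real m / real n * (1 / \<alpha>) * \<beta> * L + (1 + 2 * (1 / \<alpha>)^2 * (real m / real n)) * PP"
    if pf: "AE x in M. \<forall>k<m. 0 \<le> phi k x * f x"
  proof -
    have "C.W \<le> B * (B + d) * C.Y2 + (B + d)^2 * PP"
      using C.W_bound_pos[OF pos[OF pf]] unfolding d_def PP_def P2 .
    also have "\<dots> \<le> B * (B + d) * L + (B + d)^2 * PP"
      using YL BBd by (intro add_right_mono mult_left_mono) auto
    finally have "C.W / (real n)^2 \<le> (B * (B + d) * L + (B + d)^2 * PP) / (real n)^2"
      using n0 by (intro divide_right_mono) auto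
    also have "\<dots> = real m / real n * (1 / \<alpha>) * \<beta> * L + ((B + d)^2 / (real n)^2) * PP"
      unfolding key using n0 by (simp add: add_divide_distrib)
    also have "(B + d)^2 / (real n)^2 \<le> 1 + 2 * (1 / \<alpha>)^2 * (real m / real n)"
    proof -
      have "(B + d)^2 \<le> (real n)^2 * (1 + 2 * (1 / \<alpha>)^2 * (real m / real n))"
        unfolding B_def dd using ar_sq[OF alpha, of "real m" "real n"] nm by simp
      then show ?thesis using n0 by (simp add: divide_le_eq mult.commute)
    qed
    then have "real m / real n * (1 / \<alpha>) * \<beta> * L + ((B + d)^2 / (real n)^2) * PP
        \<le> real m / real n * (1 / \<alpha>) * \<beta> * L + (1 + 2 * (1 / \<alpha>)^2 * (real m / real n)) * PP"
      using PP0 by (intro add_left_mono mult_right_mono) auto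
    finally show ?thesis .
  qed
  show ?thesis
    unfolding E L_def[symmetric] PP_def[symmetric]
    using part1 part2 by (auto intro: ennreal_leI)
qed


end
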